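(* Let $(\theta_k)$ and $(\psi_k)$ be uniformly convergent sequences of continuous maps $I\to G$ such that $P^-\theta_k(s)=P^-\psi_k(s)$ for all $s\in I$ and $k$. Let $(x_k)$ be a sequence in $G/\Gamma$ and $t_k\to\infty$. Suppose there is a $Z_G(A)$-invariant probability measure $\mu$ on $G/\Gamma$ such that for every subinterval $J\subset I$ with nonempty interior and every $f\in C_c(G/\Gamma)$, $$\lim_{k\to\infty}\frac{1}{|J|}\int_J f(a_{t_k}\theta_k(s)x_k)\,ds=\int_{G/\Gamma}f\,d\mu.$$ Then for every $f\in C_c(G/\Gamma)$, $\lim_{k\to\infty}\frac{1}{|I|}\int_I f(a_{t_k}\psi_k(s)x_k)\,ds=\int_{G/\Gamma}f\,d\mu$.
   Context: $G=\mathrm{SO}(n,1)$ as $\mathrm{SO}(Q_n)$ with $Q_n=2yz-\sum x_i^2$; $\Gamma$ a lattice; $I$ a compact interval; $a_t=\mathrm{diag}(e^t,1,\dots,1,e^{-t})$, $A=\{a_t\}$, $Z_G(A)$ its centralizer; $P^-=\{g\in G:\overline{\{a_tga_t^{-1}:t>0\}}\text{ compact}\}$. *)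

theory Defs
  imports "HOL-Probability.Probability"
begin

text \<open>Matrices of size (n+1) x (n+1) indexed by a finite linearly ordered type 'i.
  The first index plays the role of y, the last of z, the others are x_1 ... x_{n-1}.\<close>

definition fst_idx :: "('i::{finite,linorder})" where "fst_idx = Min UNIV"
definition lst_idx :: "('i::{finite,linorder})" where "lst_idx = Max UNIV"

definition Qform :: "(real, 'i::{finite,linorder}) vec \<Rightarrow> real" where
  "Qform v = 2 * (v $ fst_idx) * (v $ lst_idx)
             - (\<Sum>i\<in>UNIV - {fst_idx, lst_idx}. (v $ i)^2)"

definition SOQ :: "(((real, 'i::{finite,linorder}) vec, 'i) vec) set" where
  "SOQ = {g. det g = 1 \<and> (\<forall>v. Qform (g *v v) = Qform v)}"

definition amat :: "real \<Rightarrow> ((real, 'i::{finite,linorder}) vec, 'i) vec" where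
  "amat t = (\<chi> i j. if i = j then (if i = fst_idx then exp t
                                    else if i = lst_idx then exp (- t) else 1) else 0)"

definition ZGA :: "(((real, 'i::{finite,linorder}) vec, 'i) vec) set" where
  "ZGA = {g \<in> SOQ. \<forall>t. g ** amat t = amat t ** g}"

definition Pminus :: "(((real, 'i::{finite,linorder}) vec, 'i) vec) set" where
  "Pminus = {g \<in> SOQ. compact (closure {amat t ** g ** matrix_inv (amat t) | t. t > 0})}"

definition Pcoset :: "((real, 'i::{finite,linorder}) vec, 'i) vec \<Rightarrow> (((real, 'i) vec, 'i) vec) set" where
  "Pcoset g = {p ** g | p. p \<in> Pminus}"

definition coset :: "(((real, 'i::finite) vec, 'i) vec) set \<Rightarrow> ((real, 'i) vec, 'i) vec \<Rightarrow> (((real, 'i) vec, 'i) vec) set" where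
  "coset \<Gamma> g = (\<lambda>\<gamma>. g ** \<gamma>) ` \<Gamma>"

definition Xspace :: "(((real, 'i::{finite,linorder}) vec, 'i) vec) set \<Rightarrow> (((real, 'i) vec, 'i) vec) set set" where
  "Xspace \<Gamma> = coset \<Gamma> ` SOQ"

definition act :: "((real, 'i::finite) vec, 'i) vec \<Rightarrow> (((real, 'i) vec, 'i) vec) set \<Rightarrow> (((real, 'i) vec, 'i) vec) set" where
  "act g x = (\<lambda>h. g ** h) ` x"

definition quot_open :: "(((real, 'i::{finite,linorder}) vec, 'i) vec) set \<Rightarrow> (((real, 'i) vec, 'i) vec) set set \<Rightarrow> bool" where
  "quot_open \<Gamma> U \<longleftrightarrow> U \<subseteq> Xspace \<Gamma> \<and>
     openin (top_of_set SOQ) {g \<in> SOQ. coset \<Gamma> g \<in> U}"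

lemma istopology_quot_open: "istopology (quot_open \<Gamma>)"
  unfolding istopology_def quot_open_def
proof (intro conjI allI impI ballI)
  fix S T
  assume "S \<subseteq> Xspace \<Gamma> \<and> openin (top_of_set SOQ) {g \<in> SOQ. coset \<Gamma> g \<in> S}"
     and "T \<subseteq> Xspace \<Gamma> \<and> openin (top_of_set SOQ) {g \<in> SOQ. coset \<Gamma> g \<in> T}"
  then show "S \<inter> T \<subseteq> Xspace \<Gamma>" by blast
  have "{g \<in> SOQ. coset \<Gamma> g \<in> S \<inter> T} =
        {g \<in> SOQ. coset \<Gamma> g \<in> S} \<inter> {g \<in> SOQ. coset \<Gamma> g \<in> T}" by blast
  then show "openin (top_of_set SOQ) {g \<in> SOQ. coset \<Gamma> g \<in> S \<inter> T}"
    using \<open>S \<subseteq> _ \<and> _\<close> \<open>T \<subseteq> _ \<and> _\<close> by (simp add: openin_Int)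
next
  fix K
  assume K: "\<forall>U\<in>K. U \<subseteq> Xspace \<Gamma> \<and> openin (top_of_set SOQ) {g \<in> SOQ. coset \<Gamma> g \<in> U}"
  then show "\<Union>K \<subseteq> Xspace \<Gamma>" by blast
  have "{g \<in> SOQ. coset \<Gamma> g \<in> \<Union>K} = (\<Union>U\<in>K. {g \<in> SOQ. coset \<Gamma> g \<in> U})" by blast
  then show "openin (top_of_set SOQ) {g \<in> SOQ. coset \<Gamma> g \<in> \<Union>K}"
    using K by (auto intro!: openin_Union)
qed

definition quot_top :: "(((real, 'i::{finite,linorder}) vec, 'i) vec) set \<Rightarrow> (((real, 'i) vec, 'i) vec) set topology" where
  "quot_top \<Gamma> = topology (quot_open \<Gamma>)"

definition borel_measure_on :: "'a topology \<Rightarrow> 'a measure \<Rightarrow> bool" where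
  "borel_measure_on T \<nu> \<longleftrightarrow> space \<nu> = topspace T \<and>
      sets \<nu> = sigma_sets (topspace T) {U. openin T U}"

text \<open>Lattice: discrete subgroup Gamma of G such that G/Gamma carries a G-invariant
  Borel probability measure (finite covolume).\<close>
definition lattice :: "(((real, 'i::{finite,linorder}) vec, 'i) vec) set \<Rightarrow> bool" where
  "lattice \<Gamma> \<longleftrightarrow> \<Gamma> \<subseteq> SOQ \<and> mat 1 \<in> \<Gamma> \<and>
     (\<forall>g\<in>\<Gamma>. \<forall>h\<in>\<Gamma>. g ** h \<in> \<Gamma>) \<and> (\<forall>g\<in>\<Gamma>. matrix_inv g \<in> \<Gamma>) \<and>
     Isolated.discrete \<Gamma> \<and>
     (\<exists>\<nu>. prob_space \<nu> \<and> borel_measure_on (quot_top \<Gamma>) \<nu> \<and>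
        (\<forall>g\<in>SOQ. \<forall>B\<in>sets \<nu>. emeasure \<nu> (act g -` B \<inter> space \<nu>) = emeasure \<nu> B))"

definition Cc :: "'a topology \<Rightarrow> ('a \<Rightarrow> real) \<Rightarrow> bool" where
  "Cc T f \<longleftrightarrow> continuous_map T euclideanreal f \<and>
     compactin T (T closure_of {x \<in> topspace T. f x \<noteq> 0})"

end

theory Submission
  imports Defs
begin

lemma bilin_mm: "bilinear ((**) :: real^'n^'m \<Rightarrow> real^'k^'n \<Rightarrow> real^'k^'m)"
  unfolding bilinear_def
  by (auto intro!: linearI simp: matrix_add_ldistrib matrix_scalar_ac vec_eq_iff matrix_matrix_mult_def
   sum.distrib algebra_simps sum_distrib_left)
lemma bb_mm: "bounded_bilinear ((**) :: real^'n^'m \<Rightarrow> real^'k^'n \<Rightarrow> real^'k^'m)"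
  using bilin_mm bilinear_conv_bounded_bilinear by blast

definition sg :: "'i::{finite,linorder} \<Rightarrow> 'i" where
  "sg i = (if i = fst_idx then lst_idx else if i = lst_idx then fst_idx else i)"
definition ep :: "'i::{finite,linorder} \<Rightarrow> real" where
  "ep i = (if i = fst_idx \<or> i = lst_idx then 1 else -1)"
definition Jm :: "((real,'i::{finite,linorder}) vec,'i) vec" where
  "Jm = (\<chi> i j. if j = sg i then ep i else 0)"
definition ginv :: "((real,'i::{finite,linorder}) vec,'i) vec \<Rightarrow> ((real,'i) vec,'i) vec" where
  "ginv g = Jm ** transpose g ** Jm"

lemma sg_sg[simp]: "sg (sg i) = i" by (auto simp: sg_def)
lemma ep_sg[simp]: "ep (sg i) = ep i" by (auto simp: sg_def ep_def)
lemma ep_sq[simp]: "ep i * ep i = 1" by (auto simp: ep_def)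

lemma Jm_Jm: "Jm ** Jm = (mat 1 :: ((real,'i::{finite,linorder}) vec,'i) vec)"
proof -
  have "(Jm ** Jm) $ i $ j = (mat 1 :: ((real,'i) vec,'i) vec) $ i $ j" for i j :: 'i
  proof -
    have "(Jm ** Jm) $ i $ j = (\<Sum>k\<in>UNIV. (if k = sg i then ep i else 0) * (if j = sg k then ep k else 0))"
      by (simp add: matrix_matrix_mult_def Jm_def)
    also have "\<dots> = (\<Sum>k\<in>UNIV. if k = sg i then ep i * (if j = sg k then ep k else 0) else 0)"
      by (rule sum.cong) auto
    also have "\<dots> = (if j = i then 1 else 0)"
      by (subst sum.delta) auto
    finally show ?thesis by (simp add: mat_def)
  qed
  then show ?thesis by (simp add: vec_eq_iff)
qed

lemma transpose_Jm: "transpose (Jm :: ((real,'i::{finite,linorder}) vec,'i) vec) = Jm"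
proof -
  have "i = sg j \<longleftrightarrow> j = sg i" for i j :: 'i by (metis sg_sg)
  then show ?thesis by (simp add: vec_eq_iff transpose_def Jm_def)
qed

lemma Jm_mulv: "(Jm *v v) $ i = ep i * v $ sg (i::'i::{finite,linorder})"
  by (simp add: matrix_vector_mult_def Jm_def if_distrib if_distribR sum.delta cong: if_cong)

lemma Qform_Jm:
  assumes ne: "fst_idx \<noteq> (lst_idx::'i::{finite,linorder})"
  shows "Qform (v::(real,'i) vec) = inner v (Jm *v v)"
proof -
  let ?R = "UNIV - {fst_idx, lst_idx} :: 'i set"
  have U: "(UNIV::'i set) = insert fst_idx (insert lst_idx ?R)" by auto
  have "inner v (Jm *v v) = (\<Sum>i\<in>UNIV. v $ i * (ep i * v $ sg i))"
    by (simp add: inner_vec_def Jm_mulv)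
  also have "\<dots> = v $ fst_idx * v $ lst_idx + v $ lst_idx * v $ fst_idx
        + (\<Sum>i\<in>?R. v $ i * (ep i * v $ sg i))"
  proof -
    let ?h = "\<lambda>i. v $ i * (ep i * v $ sg i)"
    have "sum ?h UNIV = sum ?h (insert fst_idx (insert lst_idx ?R))" using U by simp
    also have "\<dots> = ?h fst_idx + (?h lst_idx + sum ?h ?R)" using ne by simp
    finally show ?thesis using ne by (simp add: ep_def sg_def)
  qed
  also have "(\<Sum>i\<in>?R. v $ i * (ep i * v $ sg i)) = - (\<Sum>i\<in>?R. (v $ i)^2)"
    by (auto simp: ep_def sg_def sum_negf[symmetric] power2_eq_square intro!: sum.cong)
  finally show ?thesis by (simp add: Qform_def)
qed

lemma inner_Jm_sym: "inner v (Jm *v (w::(real,'i::{finite,linorder}) vec)) = inner w (Jm *v v)"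
proof -
  have "inner v (Jm *v w) = inner (v v* Jm) w" by (simp add: dot_lmul_matrix)
  also have "v v* Jm = Jm *v v" by (metis transpose_Jm vector_transpose_matrix)
  finally show ?thesis by (simp add: inner_commute)
qed

lemma SOQ_Jm:
  assumes ne: "fst_idx \<noteq> (lst_idx::'i::{finite,linorder})" and g: "g \<in> SOQ"
  shows "transpose g ** Jm ** g = (Jm :: ((real,'i) vec,'i) vec)"
proof -
  have Q: "Qform (g *v v) = Qform v" for v using g by (auto simp: SOQ_def)
  have P: "inner (g *v v) (Jm *v (g *v w)) = inner v (Jm *v w)" for v w
  proof -
    have e: "Qform (u + u') = Qform u + Qform u' + 2 * inner u (Jm *v u')" for u u' :: "(real,'i) vec"
      using inner_Jm_sym[of u u'] by (simp add: Qform_Jm[OF ne] matrix_vector_right_distrib inner_add_left inner_add_right)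
    have "Qform (g *v (v + w)) = Qform (v + w)" by (rule Q)
    then show ?thesis using Q[of v] Q[of w] by (simp add: matrix_vector_right_distrib e)
  qed
  have "(transpose g ** Jm ** g) *v w = Jm *v w" for w
  proof -
    have "inner v ((transpose g ** Jm ** g) *v w) = inner v (Jm *v w)" for v
    proof -
      have "inner (g *v v) (Jm *v (g *v w)) = inner v (transpose g *v (Jm *v (g *v w)))"
        by (metis dot_lmul_matrix vector_transpose_matrix)
      then show ?thesis using P[of v w] by (simp add: matrix_vector_mul_assoc matrix_mul_assoc)
    qed
    then have "inner (((transpose g ** Jm ** g) *v w) - Jm *v w) (((transpose g ** Jm ** g) *v w) - Jm *v w) = 0"
      by (simp add: inner_diff_right)
    then show ?thesis by simp
  qed
  then show ?thesis by (simp add: matrix_eq)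
qed

lemma ginv_left:
  assumes ne: "fst_idx \<noteq> (lst_idx::'i::{finite,linorder})" and g: "g \<in> SOQ"
  shows "ginv g ** g = (mat 1 :: ((real,'i) vec,'i) vec)"
proof -
  have "ginv g ** g = Jm ** (transpose g ** Jm ** g)" by (simp add: ginv_def matrix_mul_assoc)
  then show ?thesis using SOQ_Jm[OF ne g] Jm_Jm by simp
qed

lemma ginv_right:
  assumes ne: "fst_idx \<noteq> (lst_idx::'i::{finite,linorder})" and g: "g \<in> SOQ"
  shows "g ** ginv g = (mat 1 :: ((real,'i) vec,'i) vec)"
  using ginv_left[OF ne g] matrix_left_right_inverse by blast

lemma fst_ne_lst:
  assumes "CARD('i::{finite,linorder}) \<ge> 2" shows "fst_idx \<noteq> (lst_idx::'i)"
proof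
  assume e: "fst_idx = (lst_idx::'i)"
  have "\<forall>x::'i. x = fst_idx"
  proof
    fix x :: 'i
    have "fst_idx \<le> x" unfolding fst_idx_def by simp
    moreover have "x \<le> lst_idx" unfolding lst_idx_def by simp
    ultimately show "x = fst_idx" using e by simp
  qed
  then have "(UNIV::'i set) = {fst_idx}" by auto
  then have "card (UNIV::'i set) = card {fst_idx::'i}" by (rule arg_cong)
  then have "CARD('i) = 1" by simp
  then show False using assms by simp
qed

lemma SOQ_mult: "g \<in> SOQ \<Longrightarrow> h \<in> SOQ \<Longrightarrow> g ** h \<in> SOQ"
  by (simp add: SOQ_def det_mul matrix_vector_mul_assoc[symmetric])

lemma mat1_SOQ: "mat 1 \<in> SOQ"
  by (simp add: SOQ_def)

lemma ginv_SOQ: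
  assumes ne: "fst_idx \<noteq> (lst_idx::'i::{finite,linorder})" and g: "(g::((real,'i) vec,'i) vec) \<in> SOQ"
  shows "ginv g \<in> SOQ"
proof -
  have "det (ginv g) * det g = 1" using ginv_left[OF ne g] by (metis det_I det_mul)
  then have d: "det (ginv g) = 1" using g by (simp add: SOQ_def)
  have "Qform (ginv g *v v) = Qform v" for v
  proof -
    have "Qform (g *v (ginv g *v v)) = Qform (ginv g *v v)" using g by (simp add: SOQ_def)
    then show ?thesis using ginv_right[OF ne g] by (simp add: matrix_vector_mul_assoc)
  qed
  then show ?thesis using d by (simp add: SOQ_def)
qed

lemma matrix_inv_eq:
  fixes A B :: "((real,'i::finite) vec,'i) vec"
  assumes "A ** B = mat 1" shows "matrix_inv A = B"
proof -
  have ex: "\<exists>A'. A ** A' = mat 1 \<and> A' ** A = mat 1"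
    using assms matrix_left_right_inverse by blast
  let ?C = "matrix_inv A"
  have C: "A ** ?C = mat 1 \<and> ?C ** A = mat 1"
    unfolding matrix_inv_def by (rule someI_ex[OF ex])
  have "?C = ?C ** (A ** B)" using assms by simp
  also have "\<dots> = B" using C by (simp add: matrix_mul_assoc)
  finally show ?thesis .
qed

lemma matrix_inv_SOQ:
  assumes ne: "fst_idx \<noteq> (lst_idx::'i::{finite,linorder})" and g: "(g::((real,'i) vec,'i) vec) \<in> SOQ"
  shows "matrix_inv g = ginv g"
  using matrix_inv_eq ginv_right[OF ne g] by blast

definition lev :: "'i::{finite,linorder} \<Rightarrow> real" where
  "lev i = (if i = fst_idx then 1 else if i = lst_idx then -1 else 0)"

lemma amat_entry: "(amat t :: ((real,'i::{finite,linorder}) vec,'i) vec) $ i $ j = (if i = j then exp (t * lev i) else 0)"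
  by (simp add: amat_def lev_def)

lemma diag_left:
  fixes D M :: "((real,'i::finite) vec,'i) vec"
  assumes "\<And>i k. D $ i $ k = (if i = k then d i else 0)"
  shows "(D ** M) $ i $ j = d i * M $ i $ j"
proof -
  have "(D ** M) $ i $ j = (\<Sum>k\<in>UNIV. if i = k then d i * M $ k $ j else 0)"
    unfolding matrix_matrix_mult_def using assms by (simp only: vec_lambda_beta) (rule sum.cong, auto)
  also have "\<dots> = d i * M $ i $ j" by simp
  finally show ?thesis .
qed

lemma diag_right:
  fixes D M :: "((real,'i::finite) vec,'i) vec"
  assumes "\<And>i k. D $ i $ k = (if i = k then d i else 0)"
  shows "(M ** D) $ i $ j = M $ i $ j * d j"
proof -
  have "(M ** D) $ i $ j = (\<Sum>k\<in>UNIV. if k = j then M $ i $ k * d j else 0)"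
    unfolding matrix_matrix_mult_def using assms by (simp only: vec_lambda_beta) (rule sum.cong, auto)
  also have "\<dots> = M $ i $ j * d j" by simp
  finally show ?thesis .
qed

lemma amat_mult: "amat s ** amat t = (amat (s + t) :: ((real,'i::{finite,linorder}) vec,'i) vec)"
  by (simp add: vec_eq_iff diag_left[OF amat_entry] amat_entry mult_exp_exp algebra_simps)

lemma amat0: "amat 0 = (mat 1 :: ((real,'i::{finite,linorder}) vec,'i) vec)"
  by (simp add: vec_eq_iff amat_entry mat_def)

lemma amat_mulv: "((amat t :: ((real,'i::{finite,linorder}) vec,'i) vec) *v v) $ i = exp (t * lev i) * v $ i"
proof -
  have "((amat t :: ((real,'i) vec,'i) vec) *v v) $ i = (\<Sum>k\<in>UNIV. if i = k then exp (t * lev i) * v $ k else 0)"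
    unfolding matrix_vector_mult_def by (simp only: vec_lambda_beta amat_entry) (rule sum.cong, auto)
  also have "\<dots> = exp (t * lev i) * v $ i" by simp
  finally show ?thesis .
qed

lemma amat_SOQ:
  assumes ne: "fst_idx \<noteq> (lst_idx::'i::{finite,linorder})"
  shows "(amat t :: ((real,'i) vec,'i) vec) \<in> SOQ"
proof -
  let ?R = "UNIV - {fst_idx, lst_idx} :: 'i set"
  have U: "(UNIV::'i set) = insert fst_idx (insert lst_idx ?R)" by auto
  have "det (amat t :: ((real,'i) vec,'i) vec) = (\<Prod>i\<in>UNIV. (amat t :: ((real,'i) vec,'i) vec) $ i $ i)"
    by (rule det_diagonal) (simp add: amat_entry)
  also have "\<dots> = (\<Prod>i\<in>(UNIV::'i set). exp (t * lev i))" by (simp add: amat_entry)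
  also have "\<dots> = (\<Prod>i\<in>insert fst_idx (insert lst_idx ?R). exp (t * lev i))" using U by simp
  also have "\<dots> = exp (t * lev (fst_idx::'i)) * (exp (t * lev (lst_idx::'i)) * (\<Prod>i\<in>?R. exp (t * lev i)))"
    using ne by simp
  also have "\<dots> = 1" using ne by (simp add: lev_def exp_minus field_simps)
  finally have d: "det (amat t :: ((real,'i) vec,'i) vec) = 1" .
  have "Qform ((amat t :: ((real,'i) vec,'i) vec) *v v) = Qform v" for v
  proof -
    have "(\<Sum>i\<in>?R. ((amat t *v v) $ i)^2) = (\<Sum>i\<in>?R. (v $ i)^2)"
      by (rule sum.cong) (auto simp: amat_mulv lev_def)
    moreover have "(amat t *v v) $ fst_idx * (amat t *v v) $ lst_idx = v $ fst_idx * v $ lst_idx"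
      using ne by (simp add: amat_mulv lev_def exp_minus field_simps)
    ultimately show ?thesis unfolding Qform_def by (simp add: mult.assoc)
  qed
  then show ?thesis using d by (simp add: SOQ_def)
qed

lemma matrix_inv_amat:
  "matrix_inv (amat t :: ((real,'i::{finite,linorder}) vec,'i) vec) = amat (-t)"
  by (rule matrix_inv_eq) (simp add: amat_mult amat0)

lemma conj_entry:
  "(amat t ** p ** amat (-t) :: ((real,'i::{finite,linorder}) vec,'i) vec) $ i $ j
     = exp (t * (lev i - lev j)) * p $ i $ j"
proof -
  have "(amat t ** p ** amat (-t) :: ((real,'i) vec,'i) vec) $ i $ j = exp (t * lev i) * p $ i $ j * exp (-t * lev j)"
    by (simp add: diag_right[OF amat_entry] diag_left[OF amat_entry])
  also have "\<dots> = exp (t * (lev i - lev j)) * p $ i $ j"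
    by (simp add: right_diff_distrib exp_diff exp_minus field_simps)
  finally show ?thesis .
qed

lemma cont_entry: "continuous_on S (\<lambda>A::(('a::real_normed_vector,'i::finite) vec,'j::finite) vec. A $ i $ j)"
  by (intro continuous_on_component continuous_on_id)

lemma continuous_mulv: "continuous_on UNIV (\<lambda>g::((real,'i::finite) vec,'i) vec. g *v v)"
proof -
  have "continuous_on UNIV (\<lambda>g::((real,'i::finite) vec,'i) vec. \<chi> i. \<Sum>j\<in>UNIV. g $ i $ j * v $ j)"
    apply (rule continuous_on_vec_lambda)
    apply (rule continuous_on_sum)
    apply (rule continuous_on_mult_right)
    apply (rule cont_entry)
    done
  then show ?thesis unfolding matrix_vector_mult_def .
qed

lemma continuous_det: "continuous_on UNIV (det :: ((real,'i::finite) vec,'i) vec \<Rightarrow> real)"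
proof -
  have "continuous_on UNIV (\<lambda>A::((real,'i) vec,'i) vec. sum (\<lambda>p. of_int (sign p) * prod (\<lambda>i. A$i$p i) UNIV) {p. p permutes UNIV})"
    apply (rule continuous_on_sum)
    apply (rule continuous_on_mult_left)
    apply (rule continuous_on_prod)
    apply (rule cont_entry)
    done
  then show ?thesis unfolding det_def[abs_def] .
qed

lemma continuous_Qform: "continuous_on UNIV (Qform :: (real,'i::{finite,linorder}) vec \<Rightarrow> real)"
proof -
  have c: "continuous_on UNIV (\<lambda>v::(real,'i) vec. v $ i)" for i
    by (rule continuous_on_component[OF continuous_on_id])
  have "continuous_on UNIV (\<lambda>v::(real,'i) vec. 2 * (v $ fst_idx) * (v $ lst_idx)
             - (\<Sum>i\<in>UNIV - {fst_idx, lst_idx}. (v $ i)^2))"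
    apply (rule continuous_on_diff)
     apply (rule continuous_on_mult)
      apply (rule continuous_on_mult_left)
      apply (rule c)
     apply (rule c)
    apply (rule continuous_on_sum)
    apply (rule continuous_on_power)
    apply (rule c)
    done
  then show ?thesis unfolding Qform_def[abs_def] .
qed

lemma closed_SOQ: "closed (SOQ :: ((real,'i::{finite,linorder}) vec,'i) vec set)"
proof -
  have eq: "SOQ = {g::((real,'i) vec,'i) vec. det g = 1} \<inter> (\<Inter>v. {g. Qform (g *v v) = Qform v})"
    by (auto simp: SOQ_def)
  moreover have c1: "closed {g::((real,'i) vec,'i) vec. det g = 1}"
    by (rule closed_Collect_eq[OF continuous_det continuous_on_const])
  moreover have c2: "closed {g::((real,'i) vec,'i) vec. Qform (g *v v) = Qform v}" for v
  proof -
    have "continuous_on UNIV (\<lambda>g::((real,'i) vec,'i) vec. Qform (g *v v))"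
      using continuous_on_compose2[OF continuous_Qform continuous_mulv[of v]] by simp
    then show ?thesis by (rule closed_Collect_eq[OF _ continuous_on_const])
  qed
  show ?thesis
    unfolding eq
    apply (rule closed_Int[OF c1])
    apply (rule closed_INT)
    using c2 apply blast
    done
qed

lemma openin_quot: "openin (quot_top \<Gamma>) U \<longleftrightarrow> quot_open \<Gamma> U"
  unfolding quot_top_def by (simp add: istopology_quot_open)

lemma coset_in_X: "g \<in> SOQ \<Longrightarrow> coset \<Gamma> g \<in> Xspace \<Gamma>"
  by (simp add: Xspace_def)

lemma topspace_quot: "topspace (quot_top \<Gamma>) = Xspace \<Gamma>"
proof
  show "topspace (quot_top \<Gamma>) \<subseteq> Xspace \<Gamma>"
    unfolding topspace_def openin_quot quot_open_def by blast
  have "{g \<in> SOQ. coset \<Gamma> g \<in> Xspace \<Gamma>} = SOQ" by (auto simp: coset_in_X)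
  then have "quot_open \<Gamma> (Xspace \<Gamma>)" unfolding quot_open_def by simp
  then show "Xspace \<Gamma> \<subseteq> topspace (quot_top \<Gamma>)"
    using openin_quot openin_subset by blast
qed

lemma act_coset: "act g (coset \<Gamma> h) = coset \<Gamma> (g ** h)"
  unfolding act_def coset_def by (auto simp: image_image matrix_mul_assoc)

lemma lattice_props:
  assumes "lattice \<Gamma>"
  shows "\<Gamma> \<subseteq> SOQ" "mat 1 \<in> \<Gamma>" "\<And>g h. g \<in> \<Gamma> \<Longrightarrow> h \<in> \<Gamma> \<Longrightarrow> g ** h \<in> \<Gamma>"
        "\<And>g. g \<in> \<Gamma> \<Longrightarrow> matrix_inv g \<in> \<Gamma>"
  using assms unfolding lattice_def by auto

lemma coset_mult:
  assumes L: "lattice \<Gamma>" and ne: "fst_idx \<noteq> (lst_idx::'i::{finite,linorder})"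
    and \<gamma>: "\<gamma> \<in> \<Gamma>"
  shows "coset \<Gamma> (g ** \<gamma>) = coset \<Gamma> (g::((real,'i) vec,'i) vec)"
proof -
  note P = lattice_props[OF L]
  have gS: "\<gamma> \<in> SOQ" using P(1) \<gamma> by auto
  have "(\<lambda>\<delta>. \<gamma> ** \<delta>) ` \<Gamma> = \<Gamma>"
  proof
    show "(\<lambda>\<delta>. \<gamma> ** \<delta>) ` \<Gamma> \<subseteq> \<Gamma>" using P(3) \<gamma> by auto
    show "\<Gamma> \<subseteq> (\<lambda>\<delta>. \<gamma> ** \<delta>) ` \<Gamma>"
    proof
      fix \<delta> assume d: "\<delta> \<in> \<Gamma>"
      have "matrix_inv \<gamma> ** \<delta> \<in> \<Gamma>" using P(3,4) \<gamma> d by auto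
      moreover have "\<gamma> ** (matrix_inv \<gamma> ** \<delta>) = \<delta>"
        using ginv_right[OF ne gS] matrix_inv_SOQ[OF ne gS] by (simp add: matrix_mul_assoc)
      ultimately show "\<delta> \<in> (\<lambda>\<delta>. \<gamma> ** \<delta>) ` \<Gamma>" by (metis image_eqI)
    qed
  qed
  then have "(\<lambda>d. g ** d) ` ((\<lambda>\<delta>. \<gamma> ** \<delta>) ` \<Gamma>) = (\<lambda>d. g ** d) ` \<Gamma>" by simp
  moreover have "(\<lambda>d. g ** d) ` ((\<lambda>\<delta>. \<gamma> ** \<delta>) ` \<Gamma>) = (\<lambda>\<delta>. (g ** \<gamma>) ** \<delta>) ` \<Gamma>"
    by (simp add: image_image matrix_mul_assoc)
  ultimately show ?thesis unfolding coset_def by simp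
qed

lemma coset_eqD:
  assumes L: "lattice \<Gamma>" and "coset \<Gamma> h = coset \<Gamma> k"
  shows "\<exists>\<gamma>\<in>\<Gamma>. k = h ** \<gamma>"
proof -
  have "k \<in> coset \<Gamma> k" unfolding coset_def using lattice_props(2)[OF L]
    by (metis image_eqI matrix_mul_rid)
  then show ?thesis using assms(2) unfolding coset_def by auto
qed

lemma F_cont:
  assumes "continuous_map (quot_top \<Gamma>) euclideanreal f"
  shows "continuous_on SOQ (\<lambda>g. f (coset \<Gamma> g))"
  unfolding continuous_on_open_invariant
proof (intro allI impI)
  fix B :: "real set" assume B: "open B"
  have "openin (quot_top \<Gamma>) {x \<in> topspace (quot_top \<Gamma>). f x \<in> B}"
    using assms B unfolding continuous_map by auto
  then have "openin (top_of_set SOQ) {g \<in> SOQ. coset \<Gamma> g \<in> {x \<in> Xspace \<Gamma>. f x \<in> B}}"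
    unfolding openin_quot quot_open_def topspace_quot by blast
  then obtain T where T: "open T" "{g \<in> SOQ. coset \<Gamma> g \<in> {x \<in> Xspace \<Gamma>. f x \<in> B}} = SOQ \<inter> T"
    unfolding openin_open by blast
  have "T \<inter> SOQ = (\<lambda>g. f (coset \<Gamma> g)) -` B \<inter> SOQ"
    using T(2) coset_in_X by blast
  then show "\<exists>A. open A \<and> A \<inter> SOQ = (\<lambda>g. f (coset \<Gamma> g)) -` B \<inter> SOQ" using T(1) by blast
qed

lemma continuous_lmul: "continuous_on UNIV (\<lambda>h::((real,'i::finite) vec,'i) vec. z ** h)"
  using bounded_bilinear.continuous_on[OF bb_mm continuous_on_const continuous_on_id] .

lemma continuous_rmul: "continuous_on UNIV (\<lambda>h::((real,'i::finite) vec,'i) vec. h ** z)"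
  using bounded_bilinear.continuous_on[OF bb_mm continuous_on_id continuous_on_const] .

lemma act_cont:
  assumes z: "z \<in> SOQ"
  shows "continuous_map (quot_top \<Gamma>) (quot_top \<Gamma>) (act z)"
  unfolding continuous_map
proof (intro conjI allI impI)
  show "act z ` topspace (quot_top \<Gamma>) \<subseteq> topspace (quot_top \<Gamma>)"
  proof
    fix y assume "y \<in> act z ` topspace (quot_top \<Gamma>)"
    then obtain g where g: "g \<in> SOQ" "y = act z (coset \<Gamma> g)"
      unfolding topspace_quot Xspace_def by blast
    then have "y = coset \<Gamma> (z ** g)" by (simp add: act_coset)
    then show "y \<in> topspace (quot_top \<Gamma>)"
      unfolding topspace_quot using coset_in_X SOQ_mult z g(1) by blast
  qed
  fix U assume "openin (quot_top \<Gamma>) U"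
  then have U: "U \<subseteq> Xspace \<Gamma>" "openin (top_of_set SOQ) {g \<in> SOQ. coset \<Gamma> g \<in> U}"
    unfolding openin_quot quot_open_def by auto
  then obtain T where T: "open T" "{g \<in> SOQ. coset \<Gamma> g \<in> U} = SOQ \<inter> T"
    unfolding openin_open by blast
  have eq: "{g \<in> SOQ. coset \<Gamma> g \<in> {x \<in> Xspace \<Gamma>. act z x \<in> U}} = SOQ \<inter> (\<lambda>h. z ** h) -` T"
  proof (intro set_eqI iffI)
    fix g assume "g \<in> {g \<in> SOQ. coset \<Gamma> g \<in> {x \<in> Xspace \<Gamma>. act z x \<in> U}}"
    then have g: "g \<in> SOQ" "coset \<Gamma> (z ** g) \<in> U" by (auto simp: act_coset)
    then have "z ** g \<in> SOQ \<inter> T" using T(2) SOQ_mult[OF z g(1)] by blast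
    then show "g \<in> SOQ \<inter> (\<lambda>h. z ** h) -` T" using g by blast
  next
    fix g assume g: "g \<in> SOQ \<inter> (\<lambda>h. z ** h) -` T"
    then have "z ** g \<in> SOQ \<inter> T" using SOQ_mult[OF z] by blast
    then have "coset \<Gamma> (z ** g) \<in> U" using T(2) by blast
    then show "g \<in> {g \<in> SOQ. coset \<Gamma> g \<in> {x \<in> Xspace \<Gamma>. act z x \<in> U}}"
      using g coset_in_X by (auto simp: act_coset)
  qed
  have "open ((\<lambda>h. z ** h) -` T)"
    using continuous_lmul T(1) open_vimage by blast
  then have "openin (top_of_set SOQ) {g \<in> SOQ. coset \<Gamma> g \<in> {x \<in> Xspace \<Gamma>. act z x \<in> U}}"
    unfolding eq openin_open by blast
  then show "openin (quot_top \<Gamma>) {x \<in> topspace (quot_top \<Gamma>). act z x \<in> U}"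
    unfolding openin_quot quot_open_def topspace_quot by blast
qed

lemma V_open:
  assumes L: "lattice \<Gamma>" and ne: "fst_idx \<noteq> (lst_idx::'i::{finite,linorder})"
  shows "openin (quot_top \<Gamma>) (coset \<Gamma> ` (SOQ \<inter> ball (g::((real,'i) vec,'i) vec) 1))"
proof -
  note P = lattice_props[OF L]
  let ?V = "coset \<Gamma> ` (SOQ \<inter> ball g 1)"
  have sub: "?V \<subseteq> Xspace \<Gamma>" unfolding Xspace_def by blast
  have eq: "{h \<in> SOQ. coset \<Gamma> h \<in> ?V} = SOQ \<inter> (\<Union>\<gamma>\<in>\<Gamma>. (\<lambda>h. h ** \<gamma>) -` ball g 1)"
  proof (intro set_eqI iffI)
    fix h assume "h \<in> {h \<in> SOQ. coset \<Gamma> h \<in> ?V}"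
    then obtain k where hk: "h \<in> SOQ" "k \<in> SOQ \<inter> ball g 1" "coset \<Gamma> h = coset \<Gamma> k" by blast
    then obtain \<gamma> where "\<gamma> \<in> \<Gamma>" "k = h ** \<gamma>" using coset_eqD[OF L] by blast
    then show "h \<in> SOQ \<inter> (\<Union>\<gamma>\<in>\<Gamma>. (\<lambda>h. h ** \<gamma>) -` ball g 1)" using hk by blast
  next
    fix h assume "h \<in> SOQ \<inter> (\<Union>\<gamma>\<in>\<Gamma>. (\<lambda>h. h ** \<gamma>) -` ball g 1)"
    then obtain \<gamma> where h: "h \<in> SOQ" "\<gamma> \<in> \<Gamma>" "h ** \<gamma> \<in> ball g 1" by blast
    then have "h ** \<gamma> \<in> SOQ" using SOQ_mult P(1) by blast
    moreover have "coset \<Gamma> (h ** \<gamma>) = coset \<Gamma> h" using coset_mult[OF L ne h(2)] .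
    ultimately show "h \<in> {h \<in> SOQ. coset \<Gamma> h \<in> ?V}" using h by (metis (no_types, lifting) IntI image_eqI mem_Collect_eq)
  qed
  have "open (\<Union>\<gamma>\<in>\<Gamma>. (\<lambda>h::((real,'i) vec,'i) vec. h ** \<gamma>) -` ball g 1)"
    by (intro open_UN ballI open_vimage[OF open_ball continuous_rmul])
  then have "openin (top_of_set SOQ) {h \<in> SOQ. coset \<Gamma> h \<in> ?V}"
    unfolding eq openin_open by blast
  then show ?thesis unfolding openin_quot quot_open_def using sub by blast
qed

lemma compact_lift:
  assumes L: "lattice \<Gamma>" and ne: "fst_idx \<noteq> (lst_idx::'i::{finite,linorder})"
    and K: "compactin (quot_top \<Gamma>) K"
  shows "\<exists>K'::((real,'i) vec,'i) vec set. compact K' \<and> K' \<subseteq> SOQ \<and> K \<subseteq> coset \<Gamma> ` K'"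
proof -
  define V where "V = (\<lambda>g::((real,'i) vec,'i) vec. coset \<Gamma> ` (SOQ \<inter> ball g 1))"
  have Ksub: "K \<subseteq> Xspace \<Gamma>" using K unfolding compactin_def topspace_quot by (rule conjunct1)
  have cov: "K \<subseteq> \<Union>(V ` SOQ)"
  proof
    fix y assume "y \<in> K"
    then have "y \<in> Xspace \<Gamma>" using Ksub by blast
    then obtain g where g: "g \<in> SOQ" "y = coset \<Gamma> g" unfolding Xspace_def by (rule imageE)
    then have "y \<in> V g" unfolding V_def by simp
    then show "y \<in> \<Union>(V ` SOQ)" using g(1) by (rule UN_I[rotated])
  qed
  have op: "\<forall>U\<in>V ` SOQ. openin (quot_top \<Gamma>) U"
  proof
    fix U assume "U \<in> V ` SOQ"
    then obtain g where "U = V g" by (rule imageE)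
    then show "openin (quot_top \<Gamma>) U" unfolding V_def using V_open[OF L ne] by simp
  qed
  have H: "\<forall>\<U>. (\<forall>U \<in> \<U>. openin (quot_top \<Gamma>) U) \<and> K \<subseteq> \<Union>\<U>
          \<longrightarrow> (\<exists>\<F>. finite \<F> \<and> \<F> \<subseteq> \<U> \<and> K \<subseteq> \<Union>\<F>)"
    using K unfolding compactin_def by (rule conjunct2)
  obtain \<F> where F: "finite \<F>" "\<F> \<subseteq> V ` SOQ" "K \<subseteq> \<Union>\<F>"
    using H[rule_format, OF conjI[OF op cov]] by (elim exE conjE)
  obtain G0 where G0: "G0 \<subseteq> SOQ" "finite G0" "\<F> = V ` G0"
    using finite_subset_image[OF F(1) F(2)] by (elim exE conjE)
  define K' where "K' = SOQ \<inter> (\<Union>g\<in>G0. cball g 1)"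
  have "compact K'" unfolding K'_def
    by (rule closed_Int_compact[OF closed_SOQ compact_UN[OF G0(2) compact_cball]])
  moreover have "K' \<subseteq> SOQ" unfolding K'_def by (rule Int_lower1)
  moreover have "K \<subseteq> coset \<Gamma> ` K'"
  proof
    fix y assume "y \<in> K"
    then have "y \<in> \<Union>(V ` G0)" using F(3) G0(3) by (simp only: subset_iff)
    then obtain g where g: "g \<in> G0" "y \<in> V g" by (rule UN_E)
    then obtain k where k: "k \<in> SOQ \<inter> ball g 1" "y = coset \<Gamma> k" unfolding V_def by blast
    then have "k \<in> K'" using g(1) unfolding K'_def by (auto intro!: bexI[of _ g])
    then show "y \<in> coset \<Gamma> ` K'" using k(2) by (rule rev_image_eqI)
  qed
  ultimately show ?thesis by blast
qed

lemma Cc_act: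
  assumes f: "Cc (quot_top \<Gamma>) f" and z: "z \<in> SOQ" and ne: "fst_idx \<noteq> (lst_idx::'i::{finite,linorder})"
  shows "Cc (quot_top \<Gamma>) (\<lambda>y. f (act (z::((real,'i) vec,'i) vec) y))"
proof -
  let ?X = "quot_top \<Gamma>"
  let ?K = "?X closure_of {x \<in> topspace ?X. f x \<noteq> 0}"
  have fc: "continuous_map ?X euclideanreal f" and Kc: "compactin ?X ?K" using f unfolding Cc_def by auto
  have ac: "continuous_map ?X ?X (act z)" by (rule act_cont[OF z])
  have cont: "continuous_map ?X euclideanreal (\<lambda>y. f (act z y))"
    using continuous_map_compose[OF ac fc] by (simp add: o_def)
  let ?C = "{y \<in> topspace ?X. act z y \<in> ?K}"
  have Ccl: "closedin ?X ?C" by (rule closedin_continuous_map_preimage[OF ac closedin_closure_of])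
  have Sub: "{y \<in> topspace ?X. f (act z y) \<noteq> 0} \<subseteq> ?C"
  proof
    fix y assume y: "y \<in> {y \<in> topspace ?X. f (act z y) \<noteq> 0}"
    then have "act z y \<in> topspace ?X" using ac unfolding continuous_map by blast
    then have "act z y \<in> {x \<in> topspace ?X. f x \<noteq> 0}" using y by blast
    then show "y \<in> ?C" using y closure_of_subset[of "{x \<in> topspace ?X. f x \<noteq> 0}" ?X] by blast
  qed
  have cl: "?X closure_of {y \<in> topspace ?X. f (act z y) \<noteq> 0} \<subseteq> ?C"
    by (rule closure_of_minimal[OF Sub Ccl])
  have zi: "ginv z \<in> SOQ" using ginv_SOQ[OF ne z] .
  have "?C \<subseteq> act (ginv z) ` ?K"
  proof
    fix y assume y: "y \<in> ?C"
    then obtain g where g: "g \<in> SOQ" "y = coset \<Gamma> g" unfolding topspace_quot Xspace_def by blast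
    have "act (ginv z) (act z y) = y" using g ginv_left[OF ne z] by (simp add: act_coset matrix_mul_assoc)
    then show "y \<in> act (ginv z) ` ?K" using y by (metis (no_types, lifting) image_eqI mem_Collect_eq)
  qed
  moreover have "compactin ?X (act (ginv z) ` ?K)" by (rule image_compactin[OF Kc act_cont[OF zi]])
  ultimately have "compactin ?X ?C" using closed_compactin Ccl by blast
  then have "compactin ?X (?X closure_of {y \<in> topspace ?X. f (act z y) \<noteq> 0})"
    using closed_compactin cl closedin_closure_of by blast
  then show ?thesis using cont unfolding Cc_def by blast
qed

lemma near_id_compact:
  fixes F :: "((real,'i::{finite,linorder}) vec,'i) vec \<Rightarrow> real"
  assumes Fc: "continuous_on SOQ F" and K1: "compact K'" and K2: "K' \<subseteq> SOQ" and e: "\<epsilon> > 0"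
  shows "\<exists>\<delta>>0. \<forall>u\<in>SOQ. \<forall>k\<in>K'. norm (u - mat 1) < \<delta> \<longrightarrow> \<bar>F (u ** k) - F k\<bar> < \<epsilon>"
proof (rule ccontr)
  assume "\<not> ?thesis"
  then have H: "\<forall>\<delta>>0. \<exists>u\<in>SOQ. \<exists>k\<in>K'. norm (u - mat 1) < \<delta> \<and> \<not> \<bar>F (u ** k) - F k\<bar> < \<epsilon>"
    by blast
  have "\<forall>n. \<exists>p. fst p \<in> SOQ \<and> snd p \<in> K' \<and> norm (fst p - mat 1) < inverse (real (Suc n))
           \<and> \<not> \<bar>F (fst p ** snd p) - F (snd p)\<bar> < \<epsilon>"
  proof
    fix n
    have "inverse (real (Suc n)) > 0" by simp
    from H[rule_format, OF this] obtain u k where "u \<in> SOQ" "k \<in> K'"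
      "norm (u - mat 1) < inverse (real (Suc n))" "\<not> \<bar>F (u ** k) - F k\<bar> < \<epsilon>" by blast
    then show "\<exists>p. fst p \<in> SOQ \<and> snd p \<in> K' \<and> norm (fst p - mat 1) < inverse (real (Suc n))
           \<and> \<not> \<bar>F (fst p ** snd p) - F (snd p)\<bar> < \<epsilon>" by (intro exI[of _ "(u,k)"]) simp
  qed
  then obtain P where P: "\<And>n. fst (P n) \<in> SOQ" "\<And>n. snd (P n) \<in> K'"
    "\<And>n. norm (fst (P n) - mat 1) < inverse (real (Suc n))"
    "\<And>n. \<not> \<bar>F (fst (P n) ** snd (P n)) - F (snd (P n))\<bar> < \<epsilon>"
    using choice[of "\<lambda>n p. fst p \<in> SOQ \<and> snd p \<in> K' \<and> norm (fst p - mat 1) < inverse (real (Suc n))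
           \<and> \<not> \<bar>F (fst p ** snd p) - F (snd p)\<bar> < \<epsilon>"] by blast
  define U where "U = (\<lambda>n. fst (P n))"
  define Kk where "Kk = (\<lambda>n. snd (P n))"
  have sc: "seq_compact K'" using K1 by (rule compact_imp_seq_compact)
  obtain l r where lr: "l \<in> K'" "strict_mono r" "(Kk \<circ> r) \<longlonglongrightarrow> l"
    using seq_compactE[OF sc, of Kk] P(2) unfolding Kk_def by blast
  have "(\<lambda>n. U n - mat 1) \<longlonglongrightarrow> 0"
  proof (rule Lim_null_comparison)
    show "\<forall>\<^sub>F n in sequentially. norm (U n - mat 1) \<le> inverse (real (Suc n))"
      using P(3) unfolding U_def by (simp add: less_imp_le)
    show "(\<lambda>n. inverse (real (Suc n))) \<longlonglongrightarrow> 0" by (rule LIMSEQ_inverse_real_of_nat)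
  qed
  then have "U \<longlonglongrightarrow> mat 1" by (rule LIM_zero_cancel)
  then have Ur: "(\<lambda>n. U (r n)) \<longlonglongrightarrow> mat 1" using LIMSEQ_subseq_LIMSEQ[OF _ lr(2)] by (simp add: o_def)
  have Kr: "(\<lambda>n. Kk (r n)) \<longlonglongrightarrow> l" using lr(3) by (simp add: o_def)
  have prod: "(\<lambda>n. U (r n) ** Kk (r n)) \<longlonglongrightarrow> mat 1 ** l"
    by (rule bounded_bilinear.tendsto[OF bb_mm Ur Kr])
  have lS: "l \<in> SOQ" using lr(1) K2 by blast
  have ev: "\<forall>\<^sub>F n in sequentially. U (r n) ** Kk (r n) \<in> SOQ"
  proof (rule always_eventually, rule allI)
    fix n show "U (r n) ** Kk (r n) \<in> SOQ"
      using P(1)[of "r n"] P(2)[of "r n"] K2 SOQ_mult unfolding U_def Kk_def by blast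
  qed
  have t1: "(\<lambda>n. F (U (r n) ** Kk (r n))) \<longlonglongrightarrow> F l"
    using continuous_on_tendsto_compose[OF Fc prod _ ev] lS by simp
  have t2: "(\<lambda>n. F (Kk (r n))) \<longlonglongrightarrow> F l"
    using continuous_on_tendsto_compose[OF Fc Kr] lS P(2) K2 unfolding Kk_def by (simp add: subset_iff)
  have "(\<lambda>n. F (U (r n) ** Kk (r n)) - F (Kk (r n))) \<longlonglongrightarrow> F l - F l"
    by (rule tendsto_diff[OF t1 t2])
  then have "\<forall>\<^sub>F n in sequentially. dist (F (U (r n) ** Kk (r n)) - F (Kk (r n))) 0 < \<epsilon>"
    using e by (simp add: tendsto_iff)
  then obtain N where "dist (F (U (r N) ** Kk (r N)) - F (Kk (r N))) 0 < \<epsilon>"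
    unfolding eventually_sequentially by blast
  then show False using P(4)[of "r N"] unfolding U_def Kk_def by simp
qed

lemma linear_transpose: "linear (transpose :: ((real,'n::finite) vec,'m::finite) vec \<Rightarrow> _)"
  by (rule linearI) (simp_all add: transpose_def vec_eq_iff)

lemma bounded_linear_ginv: "bounded_linear (ginv :: ((real,'i::{finite,linorder}) vec,'i) vec \<Rightarrow> _)"
proof -
  have "bounded_linear (transpose :: ((real,'i) vec,'i) vec \<Rightarrow> _)"
    using linear_transpose linear_conv_bounded_linear by blast
  moreover have "bounded_linear (\<lambda>g::((real,'i) vec,'i) vec. Jm ** g)"
    by (rule bounded_bilinear.bounded_linear_right[OF bb_mm])
  moreover have "bounded_linear (\<lambda>g::((real,'i) vec,'i) vec. g ** Jm)"
    by (rule bounded_bilinear.bounded_linear_left[OF bb_mm])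
  ultimately have "bounded_linear (\<lambda>g::((real,'i) vec,'i) vec. (Jm ** transpose g) ** Jm)"
    using bounded_linear_compose[of "\<lambda>g::((real,'i) vec,'i) vec. g ** Jm" "\<lambda>g. Jm ** transpose g"]
      bounded_linear_compose[of "\<lambda>g::((real,'i) vec,'i) vec. Jm ** g" transpose] by blast
  then show ?thesis unfolding ginv_def[abs_def] .
qed

lemma ginv_mat1: "ginv (mat 1 :: ((real,'i::{finite,linorder}) vec,'i) vec) = mat 1"
  by (simp add: ginv_def Jm_Jm)

lemma ginv_diff: "ginv (a - b :: ((real,'i::{finite,linorder}) vec,'i) vec) = ginv a - ginv b"
  by (rule linear_diff[OF bounded_linear.linear[OF bounded_linear_ginv]])

lemma near_id:
  fixes \<Gamma> :: "((real,'i::{finite,linorder}) vec,'i) vec set"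
  assumes L: "lattice \<Gamma>" and ne: "fst_idx \<noteq> (lst_idx::'i::{finite,linorder})"
    and f: "Cc (quot_top \<Gamma>) f" and e: "\<epsilon> > 0"
  shows "\<exists>\<delta>>0. \<forall>u\<in>SOQ. \<forall>w\<in>SOQ. norm (u - mat 1) < \<delta> \<longrightarrow>
           \<bar>f (coset \<Gamma> (u ** w)) - f (coset \<Gamma> (w::((real,'i) vec,'i) vec))\<bar> < \<epsilon>"
proof -
  let ?X = "quot_top \<Gamma>"
  let ?S = "{x \<in> topspace ?X. f x \<noteq> 0}"
  let ?K = "?X closure_of ?S"
  have fc: "continuous_map ?X euclideanreal f" and Kc: "compactin ?X ?K" using f unfolding Cc_def by auto
  obtain K' :: "((real,'i) vec,'i) vec set" where K': "compact K'" "K' \<subseteq> SOQ" "?K \<subseteq> coset \<Gamma> ` K'"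
    using compact_lift[OF L ne Kc] by blast
  have SK: "?S \<subseteq> ?K" by (rule closure_of_subset) blast
  define F where "F = (\<lambda>g. f (coset \<Gamma> g))"
  have Fc: "continuous_on SOQ F" unfolding F_def by (rule F_cont[OF fc])
  obtain \<delta> where d: "\<delta> > 0" "\<forall>u\<in>SOQ. \<forall>k\<in>K'. norm (u - mat 1) < \<delta> \<longrightarrow> \<bar>F (u ** k) - F k\<bar> < \<epsilon>"
    using near_id_compact[OF Fc K'(1,2) e] by blast
  obtain Kg where Kg: "Kg > 0" "\<And>x::((real,'i) vec,'i) vec. norm (ginv x) \<le> norm x * Kg"
    using bounded_linear.pos_bounded[OF bounded_linear_ginv] by blast
  define \<delta>' where "\<delta>' = \<delta> / (Kg + 1)"
  have d'pos: "\<delta>' > 0" unfolding \<delta>'_def using d(1) Kg(1) by simp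
  have d'1: "\<delta>' \<le> \<delta>" unfolding \<delta>'_def using d(1) Kg(1) by (simp add: field_simps)
  have d'2: "\<delta>' * Kg \<le> \<delta>" unfolding \<delta>'_def using d(1) Kg(1) by (simp add: field_simps)
  have lift: "\<exists>k\<in>K'. \<exists>\<gamma>\<in>\<Gamma>. k = g ** \<gamma>" if g: "g \<in> SOQ" "f (coset \<Gamma> g) \<noteq> 0" for g
  proof -
    have "coset \<Gamma> g \<in> ?S" using g coset_in_X[OF g(1)] topspace_quot by blast
    then have "coset \<Gamma> g \<in> coset \<Gamma> ` K'" using SK K'(3) by blast
    then obtain k where k: "k \<in> K'" "coset \<Gamma> g = coset \<Gamma> k" by (metis imageE)
    then show ?thesis using coset_eqD[OF L k(2)] by blast
  qed
  have GS: "\<gamma> \<in> SOQ" if "\<gamma> \<in> \<Gamma>" for \<gamma> using lattice_props(1)[OF L] that by blast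
  show ?thesis
  proof (intro exI[of _ \<delta>'] conjI ballI impI d'pos)
    fix u w :: "((real,'i) vec,'i) vec" assume u: "u \<in> SOQ" and w: "w \<in> SOQ" and uw: "norm (u - mat 1) < \<delta>'"
    have u1: "norm (u - mat 1) < \<delta>" using uw d'1 by simp
    have "norm (ginv u - mat 1) = norm (ginv (u - mat 1))" by (simp add: ginv_diff ginv_mat1)
    also have "\<dots> \<le> norm (u - mat 1) * Kg" using Kg(2)[of "u - mat 1"] by simp
    also have "\<dots> < \<delta>' * Kg" using uw Kg(1) by simp
    finally have u2: "norm (ginv u - mat 1) < \<delta>" using d'2 by simp
    have uS: "ginv u \<in> SOQ" by (rule ginv_SOQ[OF ne u])
    have uwS: "u ** w \<in> SOQ" by (rule SOQ_mult[OF u w])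
    show "\<bar>f (coset \<Gamma> (u ** w)) - f (coset \<Gamma> w)\<bar> < \<epsilon>"
    proof (cases "f (coset \<Gamma> w) \<noteq> 0")
      case True
      then obtain k \<gamma> where k: "k \<in> K'" "\<gamma> \<in> \<Gamma>" "k = w ** \<gamma>" using lift[OF w] by blast
      have "F (u ** k) = f (coset \<Gamma> (u ** w))"
        unfolding F_def k(3) using coset_mult[OF L ne k(2), of "u ** w"] by (simp add: matrix_mul_assoc)
      moreover have "F k = f (coset \<Gamma> w)" unfolding F_def k(3) using coset_mult[OF L ne k(2)] by simp
      ultimately show ?thesis using d(2) u k(1) u1 by metis
    next
      case False
      show ?thesis
      proof (cases "f (coset \<Gamma> (u ** w)) \<noteq> 0")
        case True
        then obtain k \<gamma> where k: "k \<in> K'" "\<gamma> \<in> \<Gamma>" "k = (u ** w) ** \<gamma>" using lift[OF uwS] by blast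
        have "ginv u ** k = w ** \<gamma>" unfolding k(3)
          using ginv_left[OF ne u] by (simp add: matrix_mul_assoc)
        then have "F (ginv u ** k) = f (coset \<Gamma> w)"
          unfolding F_def using coset_mult[OF L ne k(2)] by simp
        moreover have "F k = f (coset \<Gamma> (u ** w))" unfolding F_def k(3) using coset_mult[OF L ne k(2)] by simp
        moreover have "\<bar>F (ginv u ** k) - F k\<bar> < \<epsilon>" using d(2) uS k(1) u2 by blast
        ultimately show ?thesis by (simp add: abs_minus_commute)
      next
        case False
        then show ?thesis using \<open>\<not> f (coset \<Gamma> w) \<noteq> 0\<close> e by simp
      qed
    qed
  qed
qed

lemma opens_Pow: "{U. openin (quot_top \<Gamma>) U} \<subseteq> Pow (topspace (quot_top \<Gamma>))"
  using openin_subset by blast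

lemma open_in_sets:
  assumes B: "borel_measure_on (quot_top \<Gamma>) \<mu>" and U: "openin (quot_top \<Gamma>) U"
  shows "U \<in> sets \<mu>"
  using B U unfolding borel_measure_on_def by (auto intro: sigma_sets.Basic)

lemma cont_borel:
  assumes B: "borel_measure_on (quot_top \<Gamma>) \<mu>"
    and f: "continuous_map (quot_top \<Gamma>) euclideanreal f"
  shows "f \<in> borel_measurable \<mu>"
proof (rule borel_measurableI)
  fix S :: "real set" assume "open S"
  then have "openin (quot_top \<Gamma>) {x \<in> topspace (quot_top \<Gamma>). f x \<in> S}"
    using f unfolding continuous_map by auto
  moreover have "f -` S \<inter> space \<mu> = {x \<in> topspace (quot_top \<Gamma>). f x \<in> S}"
    using B unfolding borel_measure_on_def by auto
  ultimately show "f -` S \<inter> space \<mu> \<in> sets \<mu>" using open_in_sets[OF B] by simp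
qed

lemma act_measurable:
  assumes B: "borel_measure_on (quot_top \<Gamma>) \<mu>" and z: "z \<in> SOQ"
  shows "act z \<in> measurable \<mu> \<mu>"
proof (rule measurable_sigma_sets)
  have ac: "continuous_map (quot_top \<Gamma>) (quot_top \<Gamma>) (act z)" by (rule act_cont[OF z])
  show "sets \<mu> = sigma_sets (topspace (quot_top \<Gamma>)) {U. openin (quot_top \<Gamma>) U}"
    using B unfolding borel_measure_on_def by simp
  show "{U. openin (quot_top \<Gamma>) U} \<subseteq> Pow (topspace (quot_top \<Gamma>))" by (rule opens_Pow)
  show "act z \<in> space \<mu> \<rightarrow> topspace (quot_top \<Gamma>)"
    using B ac unfolding borel_measure_on_def continuous_map by auto
  fix U assume "U \<in> {U. openin (quot_top \<Gamma>) U}"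
  then have "openin (quot_top \<Gamma>) {x \<in> topspace (quot_top \<Gamma>). act z x \<in> U}"
    using ac unfolding continuous_map by auto
  moreover have "act z -` U \<inter> space \<mu> = {x \<in> topspace (quot_top \<Gamma>). act z x \<in> U}"
    using B unfolding borel_measure_on_def by auto
  ultimately show "act z -` U \<inter> space \<mu> \<in> sets \<mu>" using open_in_sets[OF B] by simp
qed

lemma integral_act_inv:
  assumes B: "borel_measure_on (quot_top \<Gamma>) \<mu>" and z: "z \<in> SOQ"
    and inv: "\<And>B. B \<in> sets \<mu> \<Longrightarrow> emeasure \<mu> (act z -` B \<inter> space \<mu>) = emeasure \<mu> B"
    and f: "continuous_map (quot_top \<Gamma>) euclideanreal f"
  shows "integral\<^sup>L \<mu> (\<lambda>y. f (act z y)) = integral\<^sup>L \<mu> f"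
proof -
  have m: "act z \<in> measurable \<mu> \<mu>" by (rule act_measurable[OF B z])
  have d: "distr \<mu> \<mu> (act z) = \<mu>"
  proof (rule measure_eqI)
    show "sets (distr \<mu> \<mu> (act z)) = sets \<mu>" by simp
    fix A assume "A \<in> sets (distr \<mu> \<mu> (act z))"
    then have A: "A \<in> sets \<mu>" by simp
    show "emeasure (distr \<mu> \<mu> (act z)) A = emeasure \<mu> A"
      using emeasure_distr[OF m A] inv[OF A] by simp
  qed
  have "integral\<^sup>L (distr \<mu> \<mu> (act z)) f = integral\<^sup>L \<mu> (\<lambda>y. f (act z y))"
    by (rule integral_distr[OF m cont_borel[OF B f]])
  then show ?thesis using d by simp
qed

lemma entry_le_norm: "\<bar>(M::((real,'n::finite) vec,'m::finite) vec) $ i $ j\<bar> \<le> norm M"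
  by (rule order_trans[OF component_le_norm_cart Finite_Cartesian_Product.norm_nth_le])

lemma norm_le_entries: "norm (M::((real,'n::finite) vec,'m::finite) vec) \<le> (\<Sum>i\<in>UNIV. \<Sum>j\<in>UNIV. \<bar>M $ i $ j\<bar>)"
proof -
  have "norm M \<le> (\<Sum>i\<in>UNIV. norm (M $ i))" by (simp add: norm_vec_def L2_set_le_sum)
  also have "\<dots> \<le> (\<Sum>i\<in>UNIV. \<Sum>j\<in>UNIV. \<bar>M $ i $ j\<bar>)" by (rule sum_mono) (rule norm_le_l1_cart)
  finally show ?thesis .
qed

lemma norm_le_entrybound:
  assumes "\<And>i j. \<bar>(M::((real,'n::finite) vec,'m::finite) vec) $ i $ j\<bar> \<le> c"
  shows "norm M \<le> real (CARD('m) * CARD('n)) * c"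
proof -
  have "norm M \<le> (\<Sum>i\<in>(UNIV::'m set). \<Sum>j\<in>(UNIV::'n set). c)"
    using norm_le_entries[of M] assms by (meson order_trans sum_mono)
  then show ?thesis by simp
qed

lemma lev_cases: "lev i = 1 \<or> lev i = 0 \<or> lev i = -1"
  by (simp add: lev_def)

lemma lev_gt: "lev i > lev j \<Longrightarrow> lev i - lev j \<ge> 1"
  using lev_cases[of i] lev_cases[of j] by auto

lemma lev_lt: "lev i < lev j \<Longrightarrow> lev i - lev j \<le> -1"
  using lev_cases[of i] lev_cases[of j] by auto

definition zpat :: "((real,'i::{finite,linorder}) vec,'i) vec \<Rightarrow> bool" where
  "zpat p \<longleftrightarrow> (\<forall>i j. lev i > lev j \<longrightarrow> p $ i $ j = 0)"

lemma Pminus_zpat: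
  assumes p: "p \<in> Pminus"
  shows "zpat (p::((real,'i::{finite,linorder}) vec,'i) vec)"
  unfolding zpat_def
proof (intro allI impI)
  fix i j :: 'i assume ij: "lev i > lev j"
  let ?S = "{amat t ** p ** matrix_inv (amat t) | t. t > 0}"
  have "compact (closure ?S)" using p by (simp add: Pminus_def)
  then have "bounded ?S" using bounded_subset[OF compact_imp_bounded closure_subset] by blast
  then obtain B where B: "B > 0" "\<And>x. x \<in> ?S \<Longrightarrow> norm x \<le> B" unfolding bounded_pos by blast
  show "p $ i $ j = 0"
  proof (rule ccontr)
    assume nz: "p $ i $ j \<noteq> 0"
    define t where "t = max 1 (ln ((B + 1) / \<bar>p $ i $ j\<bar>))"
    have tpos: "t > 0" unfolding t_def by simp
    have "amat t ** p ** amat (-t) \<in> ?S" using tpos by (intro CollectI exI[of _ t]) (simp add: matrix_inv_amat)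
    then have "norm (amat t ** p ** amat (-t)) \<le> B" by (rule B(2))
    then have "\<bar>exp (t * (lev i - lev j)) * p $ i $ j\<bar> \<le> B"
      using entry_le_norm[of "amat t ** p ** amat (-t)" i j] by (simp add: conj_entry)
    moreover have "exp t \<le> exp (t * (lev i - lev j))"
      using lev_gt[OF ij] tpos by (simp add: mult_le_cancel_left1)
    moreover have "(B + 1) / \<bar>p $ i $ j\<bar> \<le> exp t"
    proof -
      have "(B + 1) / \<bar>p $ i $ j\<bar> = exp (ln ((B + 1) / \<bar>p $ i $ j\<bar>))" using B(1) nz by simp
      also have "\<dots> \<le> exp t" unfolding t_def by simp
      finally show ?thesis .
    qed
    ultimately have "(B + 1) / \<bar>p $ i $ j\<bar> \<le> exp (t * (lev i - lev j))" by linarith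
    then have "(B + 1) / \<bar>p $ i $ j\<bar> * \<bar>p $ i $ j\<bar> \<le> exp (t * (lev i - lev j)) * \<bar>p $ i $ j\<bar>"
      by (rule mult_right_mono) simp
    also have "\<dots> = \<bar>exp (t * (lev i - lev j)) * p $ i $ j\<bar>" by (simp add: abs_mult)
    also have "\<dots> \<le> B" by fact
    finally show False using nz by simp
  qed
qed

definition zz :: "((real,'i::{finite,linorder}) vec,'i) vec \<Rightarrow> ((real,'i) vec,'i) vec" where
  "zz p = (\<chi> i j. if lev i = lev j then p $ i $ j else 0)"

lemma conj_tendsto:
  assumes "zpat p"
  shows "(\<lambda>n. amat (real n) ** p ** amat (- real n)) \<longlonglongrightarrow> (zz p :: ((real,'i::{finite,linorder}) vec,'i) vec)"
proof (rule vec_tendstoI, rule vec_tendstoI)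
  fix i j :: 'i
  show "(\<lambda>n. (amat (real n) ** p ** amat (- real n)) $ i $ j) \<longlonglongrightarrow> zz p $ i $ j"
  proof (cases "lev i < lev j")
    case True
    have en: "exp (real n * (lev i - lev j)) = exp (lev i - lev j) ^ n" for n
      by (rule exp_of_nat_mult)
    have "norm (exp (lev i - lev j)) < 1" using True by simp
    then have "(\<lambda>n. exp (lev i - lev j) ^ n) \<longlonglongrightarrow> 0" by (rule LIMSEQ_power_zero)
    then have "(\<lambda>n. exp (lev i - lev j) ^ n * p $ i $ j) \<longlonglongrightarrow> 0 * p $ i $ j"
      by (rule tendsto_mult_right)
    then show ?thesis using True by (simp add: conj_entry en zz_def)
  next
    case False
    then show ?thesis
    proof (cases "lev i = lev j")
      case True then show ?thesis by (simp add: conj_entry zz_def)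
    next
      case False
      then have "lev i > lev j" using \<open>\<not> lev i < lev j\<close> by simp
      then show ?thesis using assms by (simp add: conj_entry zz_def zpat_def)
    qed
  qed
qed

lemma zz_ZGA:
  assumes ne: "fst_idx \<noteq> (lst_idx::'i::{finite,linorder})" and p: "p \<in> SOQ" and zp: "zpat p"
  shows "zz (p::((real,'i) vec,'i) vec) \<in> ZGA"
proof -
  have "zz p \<in> SOQ"
  proof (rule closed_sequentially[OF closed_SOQ _ conj_tendsto[OF zp]])
    fix n show "amat (real n) ** p ** amat (- real n) \<in> SOQ"
      using amat_SOQ[OF ne] p SOQ_mult by blast
  qed
  moreover have "zz p ** amat t = amat t ** zz p" for t
  proof -
    have "(zz p ** amat t) $ i $ j = (amat t ** zz p) $ i $ j" for i j
      by (simp add: diag_right[OF amat_entry] diag_left[OF amat_entry] zz_def)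
    then show ?thesis by (simp add: vec_eq_iff)
  qed
  ultimately show ?thesis by (simp add: ZGA_def)
qed

lemma conj_diff_bound:
  assumes zp: "zpat (p::((real,'i::{finite,linorder}) vec,'i) vec)" and zq: "zpat q" and t: "t \<ge> 0"
  shows "norm (amat t ** p ** amat (-t) - zz q)
          \<le> real (CARD('i) * CARD('i)) * (norm (p - q) + exp (-t) * norm p)"
proof (rule norm_le_entrybound)
  fix i j :: 'i
  have a: "\<bar>p $ i $ j - q $ i $ j\<bar> \<le> norm (p - q)" using entry_le_norm[of "p - q" i j] by simp
  have b: "\<bar>p $ i $ j\<bar> \<le> norm p" by (rule entry_le_norm)
  have c: "0 \<le> exp (-t) * norm p" by simp
  show "\<bar>(amat t ** p ** amat (-t) - zz q) $ i $ j\<bar> \<le> norm (p - q) + exp (-t) * norm p"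
  proof (cases "lev i < lev j")
    case True
    have "exp (t * (lev i - lev j)) \<le> exp (-t)"
      using mult_left_mono[OF lev_lt[OF True] t] by simp
    then have "\<bar>exp (t * (lev i - lev j)) * p $ i $ j\<bar> \<le> exp (-t) * norm p"
      using b by (simp add: abs_mult mult_mono)
    then show ?thesis using True a by (simp add: conj_entry zz_def)
  next
    case False
    show ?thesis
    proof (cases "lev i = lev j")
      case True
      then have "\<bar>(amat t ** p ** amat (-t) - zz q) $ i $ j\<bar> = \<bar>p $ i $ j - q $ i $ j\<bar>"
        by (simp add: conj_entry zz_def)
      then show ?thesis using a c by linarith
    next
      case False
      then have "lev i > lev j" using \<open>\<not> lev i < lev j\<close> by simp
      then show ?thesis using zp zq c by (simp add: conj_entry zz_def zpat_def)
    qed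
  qed
qed

lemma integral_split_sum:
  fixes g :: "real \<Rightarrow> real"
  assumes g: "continuous_on {a..b} g" and ab: "a \<le> b" and N: "N > (0::nat)"
  shows "integral {a..b} g = (\<Sum>j<N. integral {a + real j * ((b - a) / N) .. a + real (Suc j) * ((b - a) / N)} g)"
proof -
  define h where "h = (b - a) / N"
  have h0: "h \<ge> 0" unfolding h_def using ab by simp
  have gi: "g integrable_on {a..b}" by (rule integrable_continuous_interval[OF g])
  have "n \<le> N \<Longrightarrow> integral {a..a + real n * h} g = (\<Sum>j<n. integral {a + real j * h .. a + real (Suc j) * h} g)" for n
  proof (induction n)
    case 0 then show ?case by simp
  next
    case (Suc n)
    have le: "a + real n * h \<le> a + real (Suc n) * h" using h0 by (simp add: algebra_simps)
    have "a + real (Suc n) * h \<le> b"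
    proof -
      have "real (Suc n) * h \<le> real N * h" using Suc.prems h0 by (intro mult_right_mono) auto
      also have "real N * h = b - a" unfolding h_def using N by simp
      finally show ?thesis by simp
    qed
    then have sub: "{a..a + real (Suc n) * h} \<subseteq> {a..b}" by auto
    have gi2: "g integrable_on {a..a + real (Suc n) * h}" by (rule integrable_on_subinterval[OF gi sub])
    have "integral {a..a + real n * h} g + integral {a + real n * h..a + real (Suc n) * h} g
          = integral {a..a + real (Suc n) * h} g"
      by (rule Henstock_Kurzweil_Integration.integral_combine[OF _ le gi2]) (use h0 in simp)
    then show ?case using Suc by simp
  qed
  from this[of N] have "integral {a..a + real N * h} g = (\<Sum>j<N. integral {a + real j * h .. a + real (Suc j) * h} g)" by simp
  moreover have "a + real N * h = b" unfolding h_def using N by simp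
  ultimately show ?thesis unfolding h_def by simp
qed

lemma integral_close:
  fixes g h :: "real \<Rightarrow> real"
  assumes g: "continuous_on {u..v} g" and h: "continuous_on {u..v} h" and uv: "u \<le> v"
    and c: "\<And>s. s \<in> {u..v} \<Longrightarrow> \<bar>g s - h s\<bar> \<le> c"
  shows "\<bar>integral {u..v} g - integral {u..v} h\<bar> \<le> c * (v - u)"
proof -
  have gi: "g integrable_on {u..v}" by (rule integrable_continuous_interval[OF g])
  have hi: "h integrable_on {u..v}" by (rule integrable_continuous_interval[OF h])
  have di: "(\<lambda>s. g s - h s) integrable_on {u..v}" by (rule integrable_diff[OF gi hi])
  have ci: "(\<lambda>s. c) integrable_on {u..v}" by (rule integrable_continuous_interval[OF continuous_on_const])
  have mci: "(\<lambda>s. - c) integrable_on {u..v}" by (rule integrable_continuous_interval[OF continuous_on_const])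
  have "integral {u..v} (\<lambda>s. g s - h s) \<le> integral {u..v} (\<lambda>s. c)"
  proof (rule integral_le[OF di ci])
    fix s assume "s \<in> {u..v}" then show "g s - h s \<le> c" using c[of s] by (simp add: abs_le_iff)
  qed
  moreover have "integral {u..v} (\<lambda>s. - c) \<le> integral {u..v} (\<lambda>s. g s - h s)"
  proof (rule integral_le[OF mci di])
    fix s assume "s \<in> {u..v}" then show "- c \<le> g s - h s" using c[of s] by (simp add: abs_le_iff)
  qed
  moreover have "integral {u..v} (\<lambda>s. g s - h s) = integral {u..v} g - integral {u..v} h"
    by (rule integral_diff[OF gi hi])
  ultimately show ?thesis using uv by (simp add: abs_le_iff mult.commute)
qed

lemma near_pair:
  fixes \<Gamma> :: "((real,'i::{finite,linorder}) vec,'i) vec set"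
  assumes L: "lattice \<Gamma>" and ne: "fst_idx \<noteq> (lst_idx::'i)"
    and f: "Cc (quot_top \<Gamma>) f" and e: "\<epsilon> > 0" and R: "R \<ge> 0"
  shows "\<exists>\<delta>>0. \<forall>c\<in>SOQ. \<forall>z\<in>SOQ. \<forall>w\<in>SOQ. norm z \<le> R \<longrightarrow> norm (c - z) < \<delta> \<longrightarrow>
           \<bar>f (coset \<Gamma> (c ** w)) - f (coset \<Gamma> (z ** w))\<bar> < \<epsilon>"
proof -
  obtain \<delta>1 where d1: "\<delta>1 > 0" "\<forall>u\<in>SOQ. \<forall>w\<in>SOQ. norm (u - mat 1) < \<delta>1 \<longrightarrow>
           \<bar>f (coset \<Gamma> (u ** w)) - f (coset \<Gamma> w)\<bar> < \<epsilon>"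
    using near_id[OF L ne f e] by blast
  obtain Kg where Kg: "Kg > 0" "\<And>x::((real,'i) vec,'i) vec. norm (ginv x) \<le> norm x * Kg"
    using bounded_linear.pos_bounded[OF bounded_linear_ginv] by blast
  obtain KK where KK: "KK > 0" "\<And>(x::((real,'i) vec,'i) vec) (y::((real,'i) vec,'i) vec). norm (x ** y) \<le> norm x * norm y * KK"
    using bounded_bilinear.pos_bounded[OF bb_mm] by blast
  define \<delta> where "\<delta> = \<delta>1 / (KK * (R * Kg + 1))"
  have pos: "KK * (R * Kg + 1) > 0" using KK(1) Kg(1) R by (simp add: add_nonneg_pos)
  have dpos: "\<delta> > 0" unfolding \<delta>_def using d1(1) pos by simp
  show ?thesis
  proof (intro exI[of _ \<delta>] conjI ballI impI dpos)
    fix c z w :: "((real,'i) vec,'i) vec"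
    assume c: "c \<in> SOQ" and z: "z \<in> SOQ" and w: "w \<in> SOQ" and zR: "norm z \<le> R" and cz: "norm (c - z) < \<delta>"
    define u where "u = c ** ginv z"
    have uS: "u \<in> SOQ" unfolding u_def using SOQ_mult[OF c ginv_SOQ[OF ne z]] .
    have zwS: "z ** w \<in> SOQ" by (rule SOQ_mult[OF z w])
    have "u - mat 1 = (c - z) ** ginv z"
      unfolding u_def using ginv_right[OF ne z] bounded_bilinear.diff_left[OF bb_mm, of c z "ginv z"] by simp
    then have "norm (u - mat 1) \<le> norm (c - z) * norm (ginv z) * KK" using KK(2)[of "c - z" "ginv z"] by simp
    also have "\<dots> \<le> norm (c - z) * (R * Kg) * KK"
    proof -
      have "norm (ginv z) \<le> R * Kg" using Kg(2)[of z] zR Kg(1) by (smt (verit) mult_right_mono)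
      then show ?thesis using KK(1) by (intro mult_right_mono mult_left_mono) auto
    qed
    also have "\<dots> \<le> norm (c - z) * (KK * (R * Kg + 1))" using KK(1) by (simp add: algebra_simps)
    also have "\<dots> < \<delta> * (KK * (R * Kg + 1))" using mult_strict_right_mono[OF cz pos] .
    also have "\<dots> = \<delta>1" unfolding \<delta>_def using pos by (metis less_irrefl nonzero_divide_eq_eq)
    finally have "norm (u - mat 1) < \<delta>1" .
    then have "\<bar>f (coset \<Gamma> (u ** (z ** w))) - f (coset \<Gamma> (z ** w))\<bar> < \<epsilon>" using d1(2) uS zwS by blast
    moreover have "u ** (z ** w) = c ** w"
      unfolding u_def using ginv_left[OF ne z] by (simp add: matrix_mul_assoc[symmetric]) (simp add: matrix_mul_assoc)
    ultimately show "\<bar>f (coset \<Gamma> (c ** w)) - f (coset \<Gamma> (z ** w))\<bar> < \<epsilon>" by simp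
  qed
qed

lemma cont_F_comp:
  assumes f: "continuous_map (quot_top \<Gamma>) euclideanreal f"
    and \<phi>: "continuous_on I \<phi>" and sub: "\<And>s. s \<in> I \<Longrightarrow> \<phi> s \<in> SOQ"
  shows "continuous_on I (\<lambda>s. f (coset \<Gamma> (\<phi> s)))"
  using continuous_on_compose2[OF F_cont[OF f] \<phi>] sub by blast

lemma cont_sandwich:
  assumes "continuous_on I (\<phi> :: real \<Rightarrow> ((real,'i::finite) vec,'i) vec)"
  shows "continuous_on I (\<lambda>s. A ** \<phi> s ** B)"
proof -
  have "continuous_on I (\<lambda>s. A ** \<phi> s)"
    by (rule bounded_bilinear.continuous_on[OF bb_mm continuous_on_const assms])
  then show ?thesis by (rule bounded_bilinear.continuous_on[OF bb_mm _ continuous_on_const])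
qed

lemma ginv_cont: "continuous_on UNIV (ginv :: ((real,'i::{finite,linorder}) vec,'i) vec \<Rightarrow> _)"
  by (rule linear_continuous_on[OF bounded_linear_ginv])

lemma zz_linear: "bounded_linear (zz :: ((real,'i::{finite,linorder}) vec,'i) vec \<Rightarrow> _)"
proof -
  have "linear (zz :: ((real,'i) vec,'i) vec \<Rightarrow> _)"
    by (rule linearI) (simp_all add: zz_def vec_eq_iff)
  then show ?thesis using linear_conv_bounded_linear by blast
qed

lemma zpat_limit:
  assumes "(\<lambda>k. P k) \<longlonglongrightarrow> p" and "\<And>k. zpat (P k)"
  shows "zpat (p :: ((real,'i::{finite,linorder}) vec,'i) vec)"
  unfolding zpat_def
proof (intro allI impI)
  fix i j :: 'i assume ij: "lev i > lev j"
  have "(\<lambda>k. P k $ i $ j) \<longlonglongrightarrow> p $ i $ j" by (intro tendsto_vec_nth assms(1))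
  moreover have "(\<lambda>k. P k $ i $ j) = (\<lambda>k. 0)" using assms(2) ij unfolding zpat_def by auto
  ultimately show "p $ i $ j = 0" using LIMSEQ_unique tendsto_const by metis
qed

lemma mat1_Pminus: "mat 1 \<in> (Pminus :: ((real,'i::{finite,linorder}) vec,'i) vec set)"
proof -
  have "{amat t ** (mat 1 :: ((real,'i) vec,'i) vec) ** matrix_inv (amat t) | t. t > 0} = {mat 1}"
  proof
    show "{amat t ** (mat 1 :: ((real,'i) vec,'i) vec) ** matrix_inv (amat t) | t. t > 0} \<subseteq> {mat 1}"
      by (auto simp: matrix_inv_amat amat_mult amat0)
    show "{mat 1} \<subseteq> {amat t ** (mat 1 :: ((real,'i) vec,'i) vec) ** matrix_inv (amat t) | t. t > 0}"
      by (auto simp: matrix_inv_amat amat_mult amat0 intro!: exI[of _ 1])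
  qed
  then show ?thesis unfolding Pminus_def using mat1_SOQ by simp
qed

theorem proposition5p1:
  fixes \<Gamma> :: "(((real, 'i::{finite,linorder}) vec, 'i) vec) set"
    and \<theta> \<psi> :: "nat \<Rightarrow> real \<Rightarrow> ((real, 'i) vec, 'i) vec"
    and x :: "nat \<Rightarrow> (((real, 'i) vec, 'i) vec) set"
    and t :: "nat \<Rightarrow> real"
    and \<mu> :: "(((real, 'i) vec, 'i) vec) set measure"
    and a b :: real
  assumes "CARD('i) \<ge> 3"
    and "lattice \<Gamma>"
    and "a < b"
    and "\<And>k. continuous_on {a..b} (\<theta> k) \<and> \<theta> k ` {a..b} \<subseteq> SOQ"
    and "\<And>k. continuous_on {a..b} (\<psi> k) \<and> \<psi> k ` {a..b} \<subseteq> SOQ"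
    and "uniformly_convergent_on {a..b} \<theta>"
    and "uniformly_convergent_on {a..b} \<psi>"
    and "\<And>k s. s \<in> {a..b} \<Longrightarrow> Pcoset (\<theta> k s) = Pcoset (\<psi> k s)"
    and "\<And>k. x k \<in> Xspace \<Gamma>"
    and "filterlim t at_top sequentially"
    and "prob_space \<mu>"
    and "borel_measure_on (quot_top \<Gamma>) \<mu>"
    and "\<And>z B. z \<in> ZGA \<Longrightarrow> B \<in> sets \<mu> \<Longrightarrow>
           emeasure \<mu> (act z -` B \<inter> space \<mu>) = emeasure \<mu> B"
    and "\<And>J f. is_interval J \<Longrightarrow> J \<subseteq> {a..b} \<Longrightarrow> interior J \<noteq> {} \<Longrightarrow>
           Cc (quot_top \<Gamma>) f \<Longrightarrow>
           (\<lambda>k. (1 / measure lborel J) *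
              integral J (\<lambda>s. f (act (amat (t k)) (act (\<theta> k s) (x k)))))
           \<longlonglongrightarrow> integral\<^sup>L \<mu> f"
  shows "\<forall>f. Cc (quot_top \<Gamma>) f \<longrightarrow>
           (\<lambda>k. (1 / (b - a)) *
              integral {a..b} (\<lambda>s. f (act (amat (t k)) (act (\<psi> k s) (x k)))))
           \<longlonglongrightarrow> integral\<^sup>L \<mu> f"
proof (intro allI impI)
  fix f assume f: "Cc (quot_top \<Gamma>) f"
  have fc: "continuous_map (quot_top \<Gamma>) euclideanreal f" using f unfolding Cc_def by blast
  have ne: "fst_idx \<noteq> (lst_idx::'i)" by (rule fst_ne_lst) (use assms(1) in simp)
  note L = assms(2)
  define I where "I = {a..b}"
  obtain \<Theta> where u\<Theta>: "uniform_limit I \<theta> \<Theta> sequentially"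
    using assms(6) unfolding uniformly_convergent_on_def I_def by blast
  obtain \<Psi> where u\<Psi>: "uniform_limit I \<psi> \<Psi> sequentially"
    using assms(7) unfolding uniformly_convergent_on_def I_def by blast
  have "\<forall>k. \<exists>g. g \<in> SOQ \<and> x k = coset \<Gamma> g" using assms(9) unfolding Xspace_def by blast
  then obtain m where m: "\<And>k. m k \<in> SOQ" "\<And>k. x k = coset \<Gamma> (m k)" by metis
  have \<theta>S: "\<And>k s. s \<in> I \<Longrightarrow> \<theta> k s \<in> SOQ" using assms(4) unfolding I_def by blast
  have \<psi>S: "\<And>k s. s \<in> I \<Longrightarrow> \<psi> k s \<in> SOQ" using assms(5) unfolding I_def by blast
  have \<theta>c: "\<And>k. continuous_on I (\<theta> k)" using assms(4) unfolding I_def by blast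
  have \<psi>c: "\<And>k. continuous_on I (\<psi> k)" using assms(5) unfolding I_def by blast
  have \<Theta>S: "\<Theta> s \<in> SOQ" if s: "s \<in> I" for s
    using closed_sequentially[OF closed_SOQ _ tendsto_uniform_limitI[OF u\<Theta> s]] \<theta>S[OF s] by blast
  have \<Psi>S: "\<Psi> s \<in> SOQ" if s: "s \<in> I" for s
    using closed_sequentially[OF closed_SOQ _ tendsto_uniform_limitI[OF u\<Psi> s]] \<psi>S[OF s] by blast
  have \<Theta>c: "continuous_on I \<Theta>"
    by (rule uniform_limit_theorem[OF _ u\<Theta>]) (simp_all add: \<theta>c)
  have \<Psi>c: "continuous_on I \<Psi>"
    by (rule uniform_limit_theorem[OF _ u\<Psi>]) (simp_all add: \<psi>c)
  define q where "q = (\<lambda>k s. \<psi> k s ** ginv (\<theta> k s))"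
  define Q where "Q = (\<lambda>s. \<Psi> s ** ginv (\<Theta> s))"
  have cI: "compact I" unfolding I_def by simp
  have gi\<Theta>c: "continuous_on I (\<lambda>s. ginv (\<Theta> s))"
    by (rule continuous_on_compose2[OF ginv_cont \<Theta>c]) simp
  have Qc: "continuous_on I Q" unfolding Q_def
    by (rule bounded_bilinear.continuous_on[OF bb_mm \<Psi>c gi\<Theta>c])
  have uq: "uniform_limit I q Q sequentially"
  proof -
    have u1: "uniform_limit I (\<lambda>k s. ginv (\<theta> k s)) (\<lambda>s. ginv (\<Theta> s)) sequentially"
      by (rule bounded_linear.uniform_limit[OF bounded_linear_ginv u\<Theta>])
    have b1: "bounded ((\<lambda>s. ginv (\<Theta> s)) ` I)"
      by (rule compact_imp_bounded[OF compact_continuous_image[OF gi\<Theta>c cI]])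
    have b2: "bounded (\<Psi> ` I)"
      by (rule compact_imp_bounded[OF compact_continuous_image[OF \<Psi>c cI]])
    show ?thesis unfolding q_def Q_def
      by (rule bounded_bilinear.bounded_uniform_limit[OF bb_mm u\<Psi> u1 b1 b2])
  qed
  have qS: "q k s \<in> SOQ" if s: "s \<in> I" for k s
    unfolding q_def using SOQ_mult[OF \<psi>S[OF s] ginv_SOQ[OF ne \<theta>S[OF s]]] .
  have \<psi>q: "\<psi> k s = q k s ** \<theta> k s" if s: "s \<in> I" for k s
    unfolding q_def using ginv_left[OF ne \<theta>S[OF s]] by (simp add: matrix_mul_assoc[symmetric])
  have qP: "zpat (q k s)" if s: "s \<in> I" for k s
  proof -
    have "\<psi> k s \<in> Pcoset (\<psi> k s)" unfolding Pcoset_def using mat1_Pminus by force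
    then have "\<psi> k s \<in> Pcoset (\<theta> k s)" using assms(8)[of s k] s unfolding I_def by simp
    then obtain p where p: "p \<in> Pminus" "\<psi> k s = p ** \<theta> k s" unfolding Pcoset_def by blast
    have "q k s = p" unfolding q_def p(2) using ginv_right[OF ne \<theta>S[OF s]]
      by (simp add: matrix_mul_assoc[symmetric])
    then show ?thesis using Pminus_zpat[OF p(1)] by simp
  qed
  have QS: "Q s \<in> SOQ" if s: "s \<in> I" for s
    unfolding Q_def using SOQ_mult[OF \<Psi>S[OF s] ginv_SOQ[OF ne \<Theta>S[OF s]]] .
  have QP: "zpat (Q s)" if s: "s \<in> I" for s
    by (rule zpat_limit[OF tendsto_uniform_limitI[OF uq s] qP[OF s]])
  define Z where "Z = (\<lambda>s. zz (Q s))"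
  have ZZ: "Z s \<in> ZGA" if s: "s \<in> I" for s unfolding Z_def by (rule zz_ZGA[OF ne QS[OF s] QP[OF s]])
  have ZS: "Z s \<in> SOQ" if s: "s \<in> I" for s using ZZ[OF s] unfolding ZGA_def by blast
  have Zc: "continuous_on I Z" unfolding Z_def
    by (rule continuous_on_compose2[of UNIV zz I Q, OF linear_continuous_on[OF zz_linear] Qc]) simp
  obtain R0 where R0: "R0 > 0" "\<And>s. s \<in> I \<Longrightarrow> norm (Z s) \<le> R0"
    using compact_imp_bounded[OF compact_continuous_image[OF Zc cI]] unfolding bounded_pos by blast
  obtain B0 where B0: "B0 > 0" "\<And>s. s \<in> I \<Longrightarrow> norm (Q s) \<le> B0"
    using compact_imp_bounded[OF compact_continuous_image[OF Qc cI]] unfolding bounded_pos by blast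
  define Lm where "Lm = integral\<^sup>L \<mu> f"
  have inv_int: "integral\<^sup>L \<mu> (\<lambda>y. f (act z y)) = Lm" if z: "z \<in> ZGA" for z
    unfolding Lm_def
    by (rule integral_act_inv[OF assms(12) _ assms(13)[OF z] fc]) (use z in \<open>simp add: ZGA_def\<close>)
  show "(\<lambda>k. (1 / (b - a)) * integral {a..b} (\<lambda>s. f (act (amat (t k)) (act (\<psi> k s) (x k))))) \<longlonglongrightarrow> Lm"
    unfolding tendsto_iff
  proof (intro allI impI)
    fix \<epsilon> :: real assume e: "\<epsilon> > 0"
    define \<eta> where "\<eta> = \<epsilon> / 4"
    have eta: "\<eta> > 0" unfolding \<eta>_def using e by simp
    obtain \<delta>2 where d2: "\<delta>2 > 0" "\<forall>c\<in>SOQ. \<forall>z\<in>SOQ. \<forall>w\<in>SOQ. norm z \<le> R0 \<longrightarrow> norm (c - z) < \<delta>2 \<longrightarrow>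
           \<bar>f (coset \<Gamma> (c ** w)) - f (coset \<Gamma> (z ** w))\<bar> < \<eta>"
      using near_pair[OF L ne f eta, of R0] R0(1) by auto
    have "uniformly_continuous_on I Z" by (rule compact_uniformly_continuous[OF Zc cI])
    then obtain d where d: "d > 0" "\<And>s s'. s \<in> I \<Longrightarrow> s' \<in> I \<Longrightarrow> dist s' s < d \<Longrightarrow> dist (Z s') (Z s) < \<delta>2"
      unfolding uniformly_continuous_on_def using d2(1) by metis
    define N :: nat where "N = nat \<lceil>(b - a) / d\<rceil> + 1"
    have Npos: "N > 0" unfolding N_def by simp
    have "(b - a) / d < real N" unfolding N_def by linarith
    then have hd: "(b - a) / real N < d" using d(1) Npos by (simp add: field_simps)
    define h where "h = (b - a) / real N"
    have hpos: "h > 0" unfolding h_def using assms(3) Npos by simp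
    define c where "c = (\<lambda>j::nat. a + real j * h)"
    have cS: "c (Suc j) - c j = h" for j unfolding c_def by (simp add: algebra_simps)
    have cN: "c N = b" unfolding c_def h_def using Npos by simp
    have cI: "{c j..c (Suc j)} \<subseteq> I" if j: "j < N" for j
    proof -
      have "c j \<ge> a" unfolding c_def using hpos by simp
      moreover have "c (Suc j) \<le> c N" unfolding c_def using hpos j by (intro add_left_mono mult_right_mono) auto
      ultimately show ?thesis using cN unfolding I_def by auto
    qed
    have cjI: "c j \<in> I" if "j < N" for j using cI[OF that] cS[of j] hpos by auto
    have hyp: "\<forall>\<^sub>F k in sequentially. \<bar>(1 / h) * integral {c j..c (Suc j)}
                 (\<lambda>s. f (act (Z (c j)) (act (amat (t k)) (act (\<theta> k s) (x k))))) - Lm\<bar> < \<eta>"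
      if j: "j < N" for j
    proof -
      have J1: "is_interval {c j..c (Suc j)}" by (rule is_interval_cc)
      have J2: "{c j..c (Suc j)} \<subseteq> {a..b}" using cI[OF j] unfolding I_def .
      have J3: "interior {c j..c (Suc j)} \<noteq> {}" using cS[of j] hpos by simp
      have Cf: "Cc (quot_top \<Gamma>) (\<lambda>y. f (act (Z (c j)) y))" by (rule Cc_act[OF f ZS[OF cjI[OF j]] ne])
      have "(\<lambda>k. (1 / measure lborel {c j..c (Suc j)}) * integral {c j..c (Suc j)}
                 (\<lambda>s. f (act (Z (c j)) (act (amat (t k)) (act (\<theta> k s) (x k))))))
            \<longlonglongrightarrow> integral\<^sup>L \<mu> (\<lambda>y. f (act (Z (c j)) y))"
        by (rule assms(14)[OF J1 J2 J3 Cf])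
      moreover have "measure lborel {c j..c (Suc j)} = h" using cS[of j] hpos by simp
      moreover have "integral\<^sup>L \<mu> (\<lambda>y. f (act (Z (c j)) y)) = Lm" by (rule inv_int[OF ZZ[OF cjI[OF j]]])
      ultimately have "(\<lambda>k. (1 / h) * integral {c j..c (Suc j)}
                 (\<lambda>s. f (act (Z (c j)) (act (amat (t k)) (act (\<theta> k s) (x k)))))) \<longlonglongrightarrow> Lm" by simp
      then show ?thesis using eta unfolding tendsto_iff dist_real_def by blast
    qed
    have ev1: "\<forall>\<^sub>F k in sequentially. \<forall>j\<in>{..<N}. \<bar>(1 / h) * integral {c j..c (Suc j)}
                 (\<lambda>s. f (act (Z (c j)) (act (amat (t k)) (act (\<theta> k s) (x k))))) - Lm\<bar> < \<eta>"
      by (rule eventually_ball_finite) (use hyp in auto)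
    define C where "C = real (CARD('i) * CARD('i))"
    have Cpos: "C > 0" unfolding C_def by simp
    define \<rho> where "\<rho> = min 1 (\<delta>2 / (2 * C))"
    have rho: "\<rho> > 0" "\<rho> \<le> 1" "\<rho> \<le> \<delta>2 / (2 * C)" unfolding \<rho>_def using d2(1) Cpos by auto
    have ev2: "\<forall>\<^sub>F k in sequentially. \<forall>s\<in>I. dist (q k s) (Q s) < \<rho>"
      by (rule uniform_limitD[OF uq rho(1)])
    define T where "T = max 0 (ln (2 * C * (B0 + 1) / \<delta>2) + 1)"
    have ev3: "\<forall>\<^sub>F k in sequentially. T \<le> t k" using assms(10) unfolding filterlim_at_top by blast
    have expT: "exp (- tk) * (B0 + 1) < \<delta>2 / (2 * C)" if tk: "T \<le> tk" for tk
    proof -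
      have pos: "2 * C * (B0 + 1) / \<delta>2 > 0" using Cpos B0(1) d2(1) by simp
      have "2 * C * (B0 + 1) / \<delta>2 = exp (ln (2 * C * (B0 + 1) / \<delta>2))" using pos by simp
      also have "\<dots> < exp tk" using tk unfolding T_def by simp
      finally have "2 * C * (B0 + 1) < \<delta>2 * exp tk" using d2(1) by (simp add: field_simps)
      then show ?thesis using Cpos by (simp add: exp_minus field_simps)
    qed
    show "\<forall>\<^sub>F k in sequentially. dist ((1 / (b - a)) * integral {a..b} (\<lambda>s. f (act (amat (t k)) (act (\<psi> k s) (x k))))) Lm < \<epsilon>"
      using ev1 ev2 ev3
    proof eventually_elim
      case (elim k)
      define tk where "tk = t k"
      have tk0: "tk \<ge> 0" using elim(3) unfolding T_def tk_def by simp
      have et: "exp (- tk) * (B0 + 1) < \<delta>2 / (2 * C)" using expT elim(3) unfolding tk_def by blast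
      define W where "W = (\<lambda>s. amat tk ** \<theta> k s ** m k)"
      define g where "g = (\<lambda>s. f (coset \<Gamma> (amat tk ** \<psi> k s ** m k)))"
      define Hh where "Hh = (\<lambda>j s. f (coset \<Gamma> (Z (c j) ** W s)))"
      have WS: "W s \<in> SOQ" if s: "s \<in> I" for s
        unfolding W_def using SOQ_mult[OF SOQ_mult[OF amat_SOQ[OF ne] \<theta>S[OF s]] m(1)] .
      have Wc: "continuous_on I W" unfolding W_def by (rule cont_sandwich[OF \<theta>c])
      have gc: "continuous_on I g" unfolding g_def
        by (rule cont_F_comp[OF fc cont_sandwich[OF \<psi>c]])
           (use SOQ_mult[OF SOQ_mult[OF amat_SOQ[OF ne] \<psi>S] m(1)] in blast)
      have Hc: "continuous_on I (Hh j)" if j: "j < N" for j unfolding Hh_def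
        by (rule cont_F_comp[OF fc bounded_bilinear.continuous_on[OF bb_mm continuous_on_const Wc]])
           (use SOQ_mult[OF ZS[OF cjI[OF j]] WS] in blast)
      have gint: "f (act (amat (t k)) (act (\<psi> k s) (x k))) = g s" for s
        unfolding g_def tk_def m(2) by (simp add: act_coset matrix_mul_assoc)
      have Hint: "f (act (Z (c j)) (act (amat (t k)) (act (\<theta> k s) (x k)))) = Hh j s" for j s
        unfolding Hh_def W_def tk_def m(2) by (simp add: act_coset matrix_mul_assoc)
      have close1: "\<bar>g s - f (coset \<Gamma> (Z s ** W s))\<bar> < \<eta>" if s: "s \<in> I" for s
      proof -
        define Ck where "Ck = amat tk ** q k s ** amat (- tk)"
        have CkS: "Ck \<in> SOQ" unfolding Ck_def
          using SOQ_mult[OF SOQ_mult[OF amat_SOQ[OF ne] qS[OF s]] amat_SOQ[OF ne]] .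
        have nq: "norm (q k s - Q s) < \<rho>" using elim(2) s by (simp add: dist_norm)
        have nqb: "norm (q k s) \<le> B0 + 1"
          using norm_triangle_ineq[of "q k s - Q s" "Q s"] nq rho(2) B0(2)[OF s] by simp
        have "norm (Ck - Z s) \<le> C * (norm (q k s - Q s) + exp (- tk) * norm (q k s))"
          unfolding Ck_def Z_def C_def by (rule conj_diff_bound[OF qP[OF s] QP[OF s] tk0])
        also have "\<dots> < C * (\<delta>2 / (2 * C) + \<delta>2 / (2 * C))"
        proof -
          have "exp (- tk) * norm (q k s) \<le> exp (- tk) * (B0 + 1)" using nqb by simp
          then have "norm (q k s - Q s) + exp (- tk) * norm (q k s) < \<delta>2 / (2 * C) + \<delta>2 / (2 * C)"
            using nq rho(3) et by linarith
          then show ?thesis using Cpos by (rule mult_strict_left_mono)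
        qed
        also have "\<dots> = \<delta>2" using Cpos by (simp add: field_simps)
        finally have nC: "norm (Ck - Z s) < \<delta>2" .
        have "Ck ** W s = amat tk ** ((q k s ** (amat (- tk) ** amat tk)) ** \<theta> k s) ** m k"
          unfolding Ck_def W_def by (simp add: matrix_mul_assoc)
        also have "\<dots> = amat tk ** \<psi> k s ** m k" using \<psi>q[OF s] by (simp add: amat_mult amat0)
        finally have CW: "Ck ** W s = amat tk ** \<psi> k s ** m k" .
        have "\<bar>f (coset \<Gamma> (Ck ** W s)) - f (coset \<Gamma> (Z s ** W s))\<bar> < \<eta>"
          using d2(2) CkS ZS[OF s] WS[OF s] R0(2)[OF s] nC by blast
        then show ?thesis unfolding g_def CW .
      qed
      have close2: "\<bar>g s - Hh j s\<bar> \<le> 2 * \<eta>" if j: "j < N" and s: "s \<in> {c j..c (Suc j)}" for j s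
      proof -
        have sI: "s \<in> I" using cI[OF j] s by blast
        have "dist s (c j) < d" using s cS[of j] hd unfolding h_def by (simp add: dist_real_def)
        then have "dist (Z s) (Z (c j)) < \<delta>2" using d(2)[OF cjI[OF j] sI] by blast
        then have "\<bar>f (coset \<Gamma> (Z s ** W s)) - f (coset \<Gamma> (Z (c j) ** W s))\<bar> < \<eta>"
          using d2(2) ZS[OF sI] ZS[OF cjI[OF j]] WS[OF sI] R0(2)[OF cjI[OF j]] by (simp add: dist_norm)
        then show ?thesis using close1[OF sI] unfolding Hh_def by linarith
      qed
      have piece: "\<bar>integral {c j..c (Suc j)} g - h * Lm\<bar> \<le> 3 * \<eta> * h" if j: "j < N" for j
      proof -
        have le: "c j \<le> c (Suc j)" using cS[of j] hpos by simp
        have "\<bar>integral {c j..c (Suc j)} g - integral {c j..c (Suc j)} (Hh j)\<bar> \<le> 2 * \<eta> * (c (Suc j) - c j)"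
          by (rule integral_close[OF continuous_on_subset[OF gc cI[OF j]]
                continuous_on_subset[OF Hc[OF j] cI[OF j]] le close2[OF j]])
        then have A: "\<bar>integral {c j..c (Suc j)} g - integral {c j..c (Suc j)} (Hh j)\<bar> \<le> 2 * \<eta> * h"
          using cS[of j] by simp
        have "\<bar>(1 / h) * integral {c j..c (Suc j)} (Hh j) - Lm\<bar> < \<eta>"
          using elim(1) j unfolding Hint by simp
        then have "\<bar>h * ((1 / h) * integral {c j..c (Suc j)} (Hh j) - Lm)\<bar> < h * \<eta>"
          using hpos by (simp add: abs_mult)
        then have B: "\<bar>integral {c j..c (Suc j)} (Hh j) - h * Lm\<bar> < \<eta> * h"
          using hpos by (simp add: algebra_simps)
        show ?thesis using A B by linarith
      qed
      have split: "integral {a..b} g = (\<Sum>j<N. integral {c j..c (Suc j)} g)"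
        unfolding c_def h_def using integral_split_sum[OF gc[unfolded I_def] _ Npos] assms(3) by simp
      have "\<bar>integral {a..b} g - (b - a) * Lm\<bar> = \<bar>\<Sum>j<N. (integral {c j..c (Suc j)} g - h * Lm)\<bar>"
      proof -
        have "(b - a) * Lm = (\<Sum>j<N. h * Lm)" unfolding h_def using Npos by simp
        then show ?thesis using split by (simp only: sum_subtractf)
      qed
      also have "\<dots> \<le> (\<Sum>j<N. \<bar>integral {c j..c (Suc j)} g - h * Lm\<bar>)" by (rule sum_abs)
      also have "\<dots> \<le> (\<Sum>j<N. 3 * \<eta> * h)" by (rule sum_mono) (rule piece, simp)
      also have "\<dots> = 3 * \<eta> * (b - a)" unfolding h_def using Npos by (simp add: field_simps)
      finally have tot: "\<bar>integral {a..b} g - (b - a) * Lm\<bar> \<le> 3 * \<eta> * (b - a)" .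
      have ba: "b - a > 0" using assms(3) by simp
      have "(1 / (b - a)) * integral {a..b} g - Lm = (integral {a..b} g - (b - a) * Lm) / (b - a)"
        using ba by (simp add: field_simps)
      then have "dist ((1 / (b - a)) * integral {a..b} g) Lm = \<bar>integral {a..b} g - (b - a) * Lm\<bar> / (b - a)"
        using ba by (simp add: dist_real_def)
      also have "\<dots> \<le> 3 * \<eta>" using tot ba by (simp only: pos_divide_le_eq[OF ba])
      also have "\<dots> < \<epsilon>" unfolding \<eta>_def using e by simp
      finally show ?case unfolding gint .
    qed
  qed
qed

end
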